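(* The $Q$-integrand $A$ is lower semicontinuous on $\mathcal A_Q(\mathbb R^2\times\mathbb R^{2\times2})$ (with respect to $\mathcal G$). Moreover, if $(a^k,X^k)$ is a sequence in $\mathcal A_Q(\mathbb R^2\times\mathbb R^{2\times2})$ with the same maximal multiplicities as $(a,X)$ and $\mathcal G((a^k,X^k),(a,X))\to0$, then $A(a^k,X^k)\to A(a,X)$. Finally there is $C=C(Q)>0$ with $A(a,X)\le C(1+\|X\|^2)$ for all $(a,X)$.
   Context: $\mathcal A_Q(\mathbb R^k)$ is the space of unordered $Q$-tuples $\sum_{i=1}^Q[x_i]$ of points of $\mathbb R^k$, with metric $\mathcal G(\sum[x_i],\sum[y_i])=\min_\sigma(\sum_i|x_i-y_{\sigma(i)}|^2)^{1/2}$; $q[x]$ denotes $x$ with multiplicity $q$, sums of $Q$-points or of multivalued maps mean concatenation; for $X=\sum[X_i]\in\mathcal A_Q(\mathbb R^{2\times 2})$, $\|X\|=\mathcal G(X,Q[0])$. A maximal decomposition of $p\in\mathcal A_Q(\mathbb R^\ell)$ is a writing $p=\sum_{j=1}^J q_j[p_j]$ with $p_j$ pairwise distinct; $p,p'$ have the same maximal multiplicities if they admit maximal decompositions $\sum_{j=1}^Jq_j[p_j]$, $\sum_{j=1}^Jq_j[p'_j]$ with the same $J$ and $q_j$. $D=(-\tfrac12,\tfrac12)^2$. For $(a,X)\in\mathcal A_Q(\mathbb R^2\times\mathbb R^{2\times2})$ with maximal decomposition $\sum_{j=1}^Jq_j[(a_j,X_j)]$ and bounded open $U\subset\mathbb R^2$,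 $\mathcal T(a,X,U)$ is the set of Lipschitz $\varphi:U\to\mathcal A_Q(\mathbb R^2)$ of the form $\varphi=\sum_{j=1}^J\varphi_j$ with $\varphi_j:U\to\mathcal A_{q_j}(\mathbb R^2)$ Lipschitz and $\varphi_j(x)=q_j[a_j+X_jx]$ for $x\in\partial U$. For $X\in\mathbb R^{2\times2}$, $\Lambda M(X)\in\Lambda^2\mathbb R^4$ is the wedge product of the two columns of the $4\times2$ matrix $\binom{I_2}{X}$, i.e. $(e_1+X_{11}e_3+X_{21}e_4)\wedge(e_2+X_{12}e_3+X_{22}e_4)$, and $\|\cdot\|$ on $\Lambda^2\mathbb R^4$ is the Euclidean norm in the basis $e_i\wedge e_j$. Fix $\varepsilon\in(0,(4/3)^{1/4})$ and let $\delta=\delta(\varepsilon)>0$ be the unique positive number such that the three $2$-vectors $v_1=(\delta e_1+\tfrac12(e_3+\varepsilon^2\delta e_2))\wedge(\delta e_2+\tfrac12(e_4+\varepsilon^2\delta e_1))$, $v_2=(\delta e_1-\tfrac12(e_3+\varepsilon^2\delta e_2))\wedge(\delta e_2-\tfrac12(e_4+\varepsilon^2\delta e_1))$, $v_3=\tfrac12(e_4+\varepsilon^2\delta e_1)\wedge(e_3+\varepsilon^2\delta e_2)$ have equal norm. Define $\psi:\mathbb R^{2\times2}\to[0,\infty)$ by $\psi(X)=0$ if $\Lambda M(X)$ is a positive multiple of some $v_i$, $i\in\{1,2,3\}$, and $\psi(X)=\|\Lambda M(X)\|$ otherwise; $\bar\psi(Y)=\sum_{i=1}^q\psi(Y_i)$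 for $Y=\sum_{i=1}^q[Y_i]\in\mathcal A_q(\mathbb R^{2\times2})$. For $q\le Q$ and $(a,X)\in\mathcal A_q(\mathbb R^2\times\mathbb R^{2\times2})$, $A^q(a,X)=\inf\{\fint_D\bar\psi(\nabla\varphi):\varphi\in\mathcal T(a,X,D)\}$ (with $Q$ replaced by $q$ in the definition of $\mathcal T$), and $A:=A^Q$; $A$ is a $Q$-integrand (invariant under simultaneous permutations of the pairs $(a_i,X_i)$). *)

theory Defs
  imports "HOL-Analysis.Analysis" "HOL-Library.Multiset"
begin

type_synonym pt2 = "real^2"
type_synonym mat2 = "real^2^2"
type_synonym qpt = "(real^2) \<times> (real^2^2)"

definition Gdist :: "'a::real_normed_vector multiset \<Rightarrow> 'a multiset \<Rightarrow> real" where
  "Gdist p p' = Inf {sqrt (\<Sum>i<size p. (norm (xs!i - ys!i))^2) | xs ys. mset xs = p \<and> mset ys = p'}"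

definition qlip :: "nat \<Rightarrow> 'b::metric_space set \<Rightarrow> ('b \<Rightarrow> 'a::real_normed_vector multiset) \<Rightarrow> bool" where
  "qlip q S f \<longleftrightarrow> (\<forall>x\<in>S. size (f x) = q) \<and> (\<exists>L. \<forall>x\<in>S. \<forall>y\<in>S. Gdist (f x) (f y) \<le> L * dist x y)"

text \<open>Differentiability of a Q-valued map (De Lellis--Spadaro): first-order approximation
  T = sum of [(f_i(x0), L_i)], with L_i = L_j whenever f_i(x0) = f_j(x0).\<close>
definition is_qdiff :: "(pt2 \<Rightarrow> pt2 multiset) \<Rightarrow> pt2 \<Rightarrow> (pt2 \<times> mat2) multiset \<Rightarrow> bool" where
  "is_qdiff f x0 T \<longleftrightarrow> image_mset fst T = f x0 \<and>
     (\<forall>u\<in>set_mset T. \<forall>w\<in>set_mset T. fst u = fst w \<longrightarrow> snd u = snd w) \<and>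
     ((\<lambda>x. Gdist (f x) (image_mset (\<lambda>(v, L). v + L *v (x - x0)) T) / norm (x - x0)) \<longlongrightarrow> 0) (at x0)"

text \<open>Gradient (a Q-point of 2x2 matrices); irrelevant value at non-differentiability points.\<close>
definition qgrad :: "(pt2 \<Rightarrow> pt2 multiset) \<Rightarrow> pt2 \<Rightarrow> mat2 multiset" where
  "qgrad f x0 = (if \<exists>T. is_qdiff f x0 T then image_mset snd (SOME T. is_qdiff f x0 T) else {#})"

text \<open>Vectors of R^4 as functions on indices 1..4; 2-vectors as coefficient functions
  on pairs (i,j), 1 <= i < j <= 4, in the basis e_i wedge e_j.\<close>
definition ev :: "nat \<Rightarrow> nat \<Rightarrow> real" where
  "ev k = (\<lambda>i. if i = k then 1 else 0)"

definition wedge :: "(nat \<Rightarrow> real) \<Rightarrow> (nat \<Rightarrow> real) \<Rightarrow> (nat \<times> nat \<Rightarrow> real)" where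
  "wedge u w = (\<lambda>(i, j). u i * w j - u j * w i)"

definition widx :: "(nat \<times> nat) set" where
  "widx = {(i, j). 1 \<le> i \<and> i < j \<and> j \<le> 4}"

definition wnorm :: "(nat \<times> nat \<Rightarrow> real) \<Rightarrow> real" where
  "wnorm W = sqrt (\<Sum>ij\<in>widx. (W ij)^2)"

definition pos_mult :: "(nat \<times> nat \<Rightarrow> real) \<Rightarrow> (nat \<times> nat \<Rightarrow> real) \<Rightarrow> bool" where
  "pos_mult W V \<longleftrightarrow> (\<exists>c>0. \<forall>ij\<in>widx. W ij = c * V ij)"

definition LM :: "mat2 \<Rightarrow> (nat \<times> nat \<Rightarrow> real)" where
  "LM X = wedge (\<lambda>i. ev 1 i + X$1$1 * ev 3 i + X$2$1 * ev 4 i)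
                (\<lambda>i. ev 2 i + X$1$2 * ev 3 i + X$2$2 * ev 4 i)"

definition v1 :: "real \<Rightarrow> real \<Rightarrow> (nat \<times> nat \<Rightarrow> real)" where
  "v1 eps d = wedge (\<lambda>i. d * ev 1 i + 1/2 * (ev 3 i + eps^2 * d * ev 2 i))
                    (\<lambda>i. d * ev 2 i + 1/2 * (ev 4 i + eps^2 * d * ev 1 i))"

definition v2 :: "real \<Rightarrow> real \<Rightarrow> (nat \<times> nat \<Rightarrow> real)" where
  "v2 eps d = wedge (\<lambda>i. d * ev 1 i - 1/2 * (ev 3 i + eps^2 * d * ev 2 i))
                    (\<lambda>i. d * ev 2 i - 1/2 * (ev 4 i + eps^2 * d * ev 1 i))"

definition v3 :: "real \<Rightarrow> real \<Rightarrow> (nat \<times> nat \<Rightarrow> real)" where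
  "v3 eps d = wedge (\<lambda>i. 1/2 * (ev 4 i + eps^2 * d * ev 1 i))
                    (\<lambda>i. ev 3 i + eps^2 * d * ev 2 i)"

definition psi :: "real \<Rightarrow> real \<Rightarrow> mat2 \<Rightarrow> real" where
  "psi eps d X = (if pos_mult (LM X) (v1 eps d) \<or> pos_mult (LM X) (v2 eps d) \<or> pos_mult (LM X) (v3 eps d)
                  then 0 else wnorm (LM X))"

definition psibar :: "real \<Rightarrow> real \<Rightarrow> mat2 multiset \<Rightarrow> real" where
  "psibar eps d Y = sum_mset (image_mset (psi eps d) Y)"

definition Dsq :: "pt2 set" where
  "Dsq = box (\<chi> i. - 1/2) (\<chi> i. 1/2)"

text \<open>The class T(a,X,U), indexing the maximal decomposition by the distinct points y of p
  (with multiplicity count p y).\<close>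
definition Tset :: "qpt multiset \<Rightarrow> pt2 set \<Rightarrow> (pt2 \<Rightarrow> pt2 multiset) set" where
  "Tset p U = {\<phi>. qlip (size p) (closure U) \<phi> \<and>
     (\<exists>\<Phi>. (\<forall>y\<in>set_mset p. qlip (count p y) (closure U) (\<Phi> y) \<and>
              (\<forall>x\<in>frontier U. \<Phi> y x = replicate_mset (count p y) (fst y + snd y *v x))) \<and>
           (\<forall>x\<in>closure U. \<phi> x = (\<Sum>y\<in>set_mset p. \<Phi> y x)))}"

definition Aq :: "real \<Rightarrow> real \<Rightarrow> qpt multiset \<Rightarrow> ennreal" where
  "Aq eps d p = (INF \<phi>\<in>Tset p Dsq.
      (\<integral>\<^sup>+x\<in>Dsq. ennreal (psibar eps d (qgrad \<phi> x)) \<partial>lborel) / emeasure lborel Dsq)"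

definition same_max_mult :: "'a multiset \<Rightarrow> 'a multiset \<Rightarrow> bool" where
  "same_max_mult p p' \<longleftrightarrow>
     image_mset (count p) (mset_set (set_mset p)) = image_mset (count p') (mset_set (set_mset p'))"

definition Xnorm :: "qpt multiset \<Rightarrow> real" where
  "Xnorm p = Gdist (image_mset snd p) (replicate_mset (size p) 0)"

end

theory Submission
  imports Defs
begin
definition gsum :: "'a::real_normed_vector list \<Rightarrow> 'a list \<Rightarrow> real" where
  "gsum xs ys = L2_set (\<lambda>i. norm (xs!i - ys!i)) {..<length xs}"

definition gset :: "'a::real_normed_vector multiset \<Rightarrow> 'a multiset \<Rightarrow> real set" where
  "gset p q = {gsum xs ys | xs ys. mset xs = p \<and> mset ys = q}"

lemma Gdist_alt: "Gdist p q = Inf (gset p q)"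
proof -
  have "{sqrt (\<Sum>i<size p. (norm (xs!i - ys!i))^2) | xs ys. mset xs = p \<and> mset ys = q} = gset p q"
    unfolding gset_def gsum_def L2_set_def by (auto; metis size_mset)
  then show ?thesis unfolding Gdist_def by simp
qed

lemma gsum_nonneg: "0 \<le> gsum xs ys"
  unfolding gsum_def by (rule L2_set_nonneg)

lemma gset_finite: "finite (gset p q)"
proof -
  have f: "finite {xs. mset xs = p}" for p :: "'a multiset"
    by (rule finite_subset[OF _ finite_lists_length_eq[of "set_mset p" "size p"]]) auto
  have "gset p q = (\<lambda>(xs,ys). gsum xs ys) ` ({xs. mset xs = p} \<times> {ys. mset ys = q})"
    unfolding gset_def by auto
  then show ?thesis using f by simp
qed

lemma Gdist_le: "mset xs = p \<Longrightarrow> mset ys = q \<Longrightarrow> Gdist p q \<le> gsum xs ys"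
  unfolding Gdist_alt
  by (rule cInf_lower) (auto simp: gset_def bdd_below_def intro!: exI[of _ 0] gsum_nonneg)

lemma Gdist_attained:
  assumes "size p = size q"
  shows "\<exists>xs ys. mset xs = p \<and> mset ys = q \<and> Gdist p q = gsum xs ys"
proof -
  obtain xs where "mset xs = p" using ex_mset by blast
  moreover obtain ys where "mset ys = q" using ex_mset by blast
  ultimately have ne: "gset p q \<noteq> {}" unfolding gset_def by auto
  have "Inf (gset p q) \<in> gset p q"
    using cInf_eq_Min[OF gset_finite ne] Min_in[OF gset_finite ne] by simp
  then show ?thesis unfolding Gdist_alt gset_def by auto
qed

lemma Gdist_nonneg: "size p = size q \<Longrightarrow> 0 \<le> Gdist p q"
  using Gdist_attained gsum_nonneg by metis

lemma gsum_ge_term: "i < length xs \<Longrightarrow> norm (xs!i - ys!i) \<le> gsum xs ys"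
  unfolding gsum_def by (rule member_le_L2_set) auto

lemma Gdist_ge:
  assumes "size p = size q" "\<And>xs ys. mset xs = p \<Longrightarrow> mset ys = q \<Longrightarrow> c \<le> gsum xs ys"
  shows "c \<le> Gdist p q"
  using Gdist_attained[OF assms(1)] assms(2) by metis

lemma gsum_swap: "length xs = length ys \<Longrightarrow> gsum xs ys = gsum ys xs"
  unfolding gsum_def by (simp add: norm_minus_commute)

lemma Gdist_sym: "size p = size q \<Longrightarrow> Gdist p q = Gdist q p"
proof -
  assume s: "size p = size q"
  have sw: "gsum xs ys = gsum ys xs" if "mset xs = p" "mset ys = q" for xs ys
    using that s by (metis gsum_swap size_mset)
  have "gset p q = gset q p"
    unfolding gset_def by (auto; metis sw)
  then show ?thesis by (simp add: Gdist_alt)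
qed

lemma gsum_realign:
  assumes "length xs = length ys" "mset ys = mset ys'"
  shows "\<exists>xs'. mset xs' = mset xs \<and> length xs' = length xs \<and> gsum xs' ys' = gsum xs ys"
proof -
  obtain f where f: "f permutes {..<length ys}" "permute_list f ys = ys'"
    using mset_eq_permutation[of ys' ys] assms(2) by metis
  define xs' where "xs' = permute_list f xs"
  have f2: "f permutes {..<length xs}" using f(1) assms(1) by simp
  have "gsum xs' ys' = L2_set (\<lambda>i. norm (xs!(f i) - ys!(f i))) {..<length xs}"
    unfolding gsum_def xs'_def f(2)[symmetric]
    by (rule L2_set_cong) (auto simp: permute_list_nth f2 f(1) assms(1))
  also have "\<dots> = gsum xs ys"
    unfolding gsum_def L2_set_def
    using sum.permute[OF f2, of "\<lambda>i. (norm (xs!i - ys!i))^2"] by (simp add: comp_def)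
  finally show ?thesis using f2 by (auto simp: xs'_def mset_permute_list[OF f2] intro!: exI[of _ "permute_list f xs"])
qed

lemma Gdist_triangle:
  assumes "size p = size q" "size q = size r"
  shows "Gdist p r \<le> Gdist p q + Gdist q r"
proof -
  obtain xs ys where 1: "mset xs = p" "mset ys = q" "Gdist p q = gsum xs ys"
    using Gdist_attained[OF assms(1)] by blast
  obtain ys' zs where 2: "mset ys' = q" "mset zs = r" "Gdist q r = gsum ys' zs"
    using Gdist_attained[OF assms(2)] by blast
  have l: "length xs = length ys" using 1 assms by (metis size_mset)
  obtain xs' where 3: "mset xs' = p" "length xs' = length xs" "gsum xs' ys' = gsum xs ys"
    using gsum_realign[OF l, of ys'] 1 2 by auto
  have l2: "length xs' = length ys'" "length ys' = length zs" using 1 2 3 assms l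
    by (metis size_mset)+
  have "Gdist p r \<le> gsum xs' zs" using Gdist_le 3 2 by blast
  also have "\<dots> \<le> L2_set (\<lambda>i. norm (xs'!i - ys'!i) + norm (ys'!i - zs!i)) {..<length xs'}"
    unfolding gsum_def by (rule L2_set_mono) (use norm_triangle_ineq[of "xs'!i - ys'!i" "ys'!i - zs!i" for i] in auto)
  also have "\<dots> \<le> gsum xs' ys' + gsum ys' zs"
    unfolding gsum_def using l2 by (simp add: L2_set_triangle_ineq)
  finally show ?thesis using 1 2 3 by simp
qed

lemma sum_split_lt: "(\<Sum>i<a+b. f i) = (\<Sum>i<a. f i) + (\<Sum>i<b. f (a + i::nat))"
  by (induct b) (auto simp: add.assoc)

lemma gsum_append:
  assumes "length xs1 = length ys1"
  shows "gsum (xs1 @ xs2) (ys1 @ ys2) \<le> gsum xs1 ys1 + gsum xs2 ys2"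
proof -
  let ?f = "\<lambda>i. (norm ((xs1@xs2)!i - (ys1@ys2)!i))^2"
  have "(\<Sum>i<length (xs1@xs2). ?f i) = (\<Sum>i<length xs1. ?f i) + (\<Sum>i<length xs2. ?f (length xs1 + i))"
    by (simp add: sum_split_lt)
  also have "\<dots> = (\<Sum>i<length xs1. (norm (xs1!i - ys1!i))^2) + (\<Sum>i<length xs2. (norm (xs2!i - ys2!i))^2)"
    using assms by (simp add: nth_append)
  finally show ?thesis unfolding gsum_def L2_set_def
    by (metis (no_types, lifting) sum_nonneg zero_le_power2 sqrt_add_le_add_sqrt)
qed

lemma Gdist_add:
  assumes "size p1 = size q1" "size p2 = size q2"
  shows "Gdist (p1 + p2) (q1 + q2) \<le> Gdist p1 q1 + Gdist p2 q2"
proof -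
  obtain xs1 ys1 where 1: "mset xs1 = p1" "mset ys1 = q1" "Gdist p1 q1 = gsum xs1 ys1"
    using Gdist_attained[OF assms(1)] by blast
  obtain xs2 ys2 where 2: "mset xs2 = p2" "mset ys2 = q2" "Gdist p2 q2 = gsum xs2 ys2"
    using Gdist_attained[OF assms(2)] by blast
  have "Gdist (p1 + p2) (q1 + q2) \<le> gsum (xs1@xs2) (ys1@ys2)"
    using 1 2 by (intro Gdist_le) auto
  also have "\<dots> \<le> gsum xs1 ys1 + gsum xs2 ys2"
    using 1 assms by (intro gsum_append) (metis size_mset)
  finally show ?thesis using 1 2 by simp
qed

lemma size_sum_mset_set: "finite S \<Longrightarrow> size (\<Sum>z\<in>S. (A z :: 'a multiset)) = (\<Sum>z\<in>S. size (A z))"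
  by (induct S rule: finite_induct) (auto simp: size_union)

lemma Gdist_sum:
  assumes "finite S" "\<forall>z\<in>S. size (A z) = size (B z)"
  shows "Gdist (\<Sum>z\<in>S. A z) (\<Sum>z\<in>S. B z) \<le> (\<Sum>z\<in>S. Gdist (A z) (B z))"
  using assms
proof (induct S rule: finite_induct)
  case empty
  show ?case using Gdist_le[of "[]" "{#}" "[]" "{#}"] by (simp add: gsum_def)
next
  case (insert x F)
  have "Gdist (\<Sum>z\<in>insert x F. A z) (\<Sum>z\<in>insert x F. B z) = Gdist (A x + (\<Sum>z\<in>F. A z)) (B x + (\<Sum>z\<in>F. B z))"
    using insert by simp
  also have "\<dots> \<le> Gdist (A x) (B x) + Gdist (\<Sum>z\<in>F. A z) (\<Sum>z\<in>F. B z)"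
    using insert by (intro Gdist_add) (auto simp: size_sum_mset_set)
  also have "\<dots> \<le> Gdist (A x) (B x) + (\<Sum>z\<in>F. Gdist (A z) (B z))"
    using insert by simp
  finally show ?case using insert by simp
qed

lemma Gdist_replicate: "Gdist (replicate_mset n a) (replicate_mset n b) \<le> real n * norm (a - b)"
proof -
  have "Gdist (replicate_mset n a) (replicate_mset n b) \<le> gsum (replicate n a) (replicate n b)"
    by (rule Gdist_le) auto
  also have "\<dots> = L2_set (\<lambda>x. norm (a - b)) {..<n}"
    unfolding gsum_def by (rule L2_set_cong) auto
  also have "\<dots> = sqrt (real n) * norm (a - b)"
    by (simp add: L2_set_constant)
  also have "\<dots> \<le> real n * norm (a - b)"
  proof (cases "n = 0")
    case False
    then have "sqrt (real n) \<le> real n" by (simp add: real_sqrt_le_iff' power2_eq_square le_square)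
    then show ?thesis by (simp add: mult_right_mono)
  qed simp
  finally show ?thesis .
qed

lemma Gdist_map:
  assumes "size p = size q" "0 \<le> c" "\<And>u v. u \<in># p \<Longrightarrow> v \<in># q \<Longrightarrow> norm (f u - f v) \<le> c * norm (u - v)"
  shows "Gdist (image_mset f p) (image_mset f q) \<le> c * Gdist p q"
proof -
  obtain xs ys where 1: "mset xs = p" "mset ys = q" "Gdist p q = gsum xs ys"
    using Gdist_attained[OF assms(1)] by blast
  have l: "length xs = length ys" using 1 assms by (metis size_mset)
  have "Gdist (image_mset f p) (image_mset f q) \<le> gsum (map f xs) (map f ys)"
    using 1 by (intro Gdist_le) auto
  also have "\<dots> \<le> L2_set (\<lambda>i. c * norm (xs!i - ys!i)) {..<length xs}"
    unfolding gsum_def length_map using l 1 by (intro L2_set_mono) (auto intro!: assms(3))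
  also have "\<dots> = c * gsum xs ys" unfolding gsum_def by (rule L2_set_right_distrib[OF assms(2), symmetric])
  finally show ?thesis using 1 by simp
qed

definition aff :: "(pt2 \<times> mat2) multiset \<Rightarrow> pt2 \<Rightarrow> pt2 multiset" where
  "aff T u = image_mset (\<lambda>(v, L). v + L *v u) T"

definition consistent :: "(pt2 \<times> mat2) multiset \<Rightarrow> bool" where
  "consistent T \<longleftrightarrow> (\<forall>u\<in>set_mset T. \<forall>w\<in>set_mset T. fst u = fst w \<longrightarrow> snd u = snd w)"

lemma is_qdiff_alt: "is_qdiff f x0 T \<longleftrightarrow> image_mset fst T = f x0 \<and> consistent T \<and>
   ((\<lambda>x. Gdist (f x) (aff T (x - x0)) / norm (x - x0)) \<longlongrightarrow> 0) (at x0)"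
  unfolding is_qdiff_def aff_def consistent_def by simp

lemma size_aff [simp]: "size (aff T u) = size T"
  by (simp add: aff_def)

lemma qdiff_lim:
  assumes "is_qdiff f x0 T" "e > 0"
  shows "\<exists>r>0. \<forall>x. x \<noteq> x0 \<and> norm (x - x0) < r \<longrightarrow> Gdist (f x) (aff T (x - x0)) < e * norm (x - x0)"
proof -
  obtain r where r: "r > 0" "\<forall>x. x \<noteq> x0 \<and> norm (x - x0) < r \<longrightarrow> norm (Gdist (f x) (aff T (x - x0)) / norm (x - x0) - 0) < e"
    using assms unfolding is_qdiff_alt LIM_eq by blast
  show ?thesis
  proof (intro exI[of _ r] conjI allI impI)
    fix x assume x: "x \<noteq> x0 \<and> norm (x - x0) < r"
    then have n: "norm (x - x0) > 0" by simp
    have a: "\<bar>Gdist (f x) (aff T (x - x0))\<bar> / norm (x - x0) < e" using r x by auto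
    have "Gdist (f x) (aff T (x - x0)) / norm (x - x0) \<le> \<bar>Gdist (f x) (aff T (x - x0))\<bar> / norm (x - x0)"
      by (rule divide_right_mono) auto
    then have "Gdist (f x) (aff T (x - x0)) / norm (x - x0) < e" using a by linarith
    then show "Gdist (f x) (aff T (x - x0)) < e * norm (x - x0)" using n by (simp add: divide_less_eq)
  qed (use r in auto)
qed

lemma sep_exists:
  assumes "finite (P :: 'a::metric_space set)"
  shows "\<exists>s>0. \<forall>y\<in>P. \<forall>y'\<in>P. y \<noteq> y' \<longrightarrow> s \<le> dist y y'"
proof -
  let ?D = "(\<lambda>(y,y'). dist y y') ` {(y,y'). y \<in> P \<and> y' \<in> P \<and> y \<noteq> y'}"
  have "{(y,y'). y \<in> P \<and> y' \<in> P \<and> y \<noteq> y'} \<subseteq> P \<times> P" by auto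
  then have fin: "finite ?D" using assms by (meson finite_SigmaI finite_imageI finite_subset)
  show ?thesis
  proof (cases "?D = {}")
    case True
    then show ?thesis by (intro exI[of _ 1]) auto
  next
    case False
    have "Min ?D \<in> ?D" using Min_in[OF fin False] .
    then have pos: "Min ?D > 0" by auto
    show ?thesis
      by (intro exI[of _ "Min ?D"] conjI pos ballI impI Min_le[OF fin]) auto
  qed
qed

lemma KL:
  assumes fst: "image_mset fst T = image_mset fst T'" and vL: "(v,L) \<in># T" and vL': "(v,L') \<in># T'"
    and cons: "consistent T'"
  shows "\<exists>t0>0. \<forall>t. 0 < t \<and> t < t0 \<longrightarrow> t * norm (L *v h - L' *v h) \<le> Gdist (aff T (t *\<^sub>R h)) (aff T' (t *\<^sub>R h))"
proof -
  let ?P = "set_mset (image_mset fst T)"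
  obtain s where s: "s > 0" "\<forall>y\<in>?P. \<forall>y'\<in>?P. y \<noteq> y' \<longrightarrow> s \<le> dist y y'"
    using sep_exists[of ?P] by blast
  define Mh where "Mh = 1 + (\<Sum>u\<in>set_mset T \<union> set_mset T'. norm (snd u *v h))"
  have Mh: "norm (A *v h) \<le> Mh" if "(w,A) \<in># T \<or> (w,A) \<in># T'" for w A
  proof -
    have "norm (snd (w,A) *v h) \<le> (\<Sum>u\<in>set_mset T \<union> set_mset T'. norm (snd u *v h))"
      by (rule member_le_sum) (use that in auto)
    then show ?thesis unfolding Mh_def by simp
  qed
  have Mh0: "Mh > 0" unfolding Mh_def by (smt (verit) norm_ge_zero sum_nonneg)
  define t0 where "t0 = s / (4 * Mh)"
  have sT: "size T = size T'" using fst by (metis size_image_mset)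
  show ?thesis
  proof (intro exI[of _ t0] conjI allI impI)
    show "t0 > 0" unfolding t0_def using s Mh0 by simp
    fix t assume t: "0 < t \<and> t < t0"
    have sz: "size (aff T (t *\<^sub>R h)) = size (aff T' (t *\<^sub>R h))" using sT by simp
    show "t * norm (L *v h - L' *v h) \<le> Gdist (aff T (t *\<^sub>R h)) (aff T' (t *\<^sub>R h))"
    proof (rule Gdist_ge[OF sz])
      fix xs ys assume xs: "mset xs = aff T (t *\<^sub>R h)" and ys: "mset ys = aff T' (t *\<^sub>R h)"
      have "v + L *v (t *\<^sub>R h) \<in># aff T (t *\<^sub>R h)" using vL unfolding aff_def by force
      then have "v + L *v (t *\<^sub>R h) \<in> set xs" using xs by (metis set_mset_mset)
      then obtain i where i: "i < length xs" "xs!i = v + L *v (t *\<^sub>R h)" by (metis in_set_conv_nth)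
      have "length ys = length xs" using xs ys sz by (metis size_mset)
      then have "ys!i \<in># aff T' (t *\<^sub>R h)" using ys i by (metis nth_mem set_mset_mset)
      then obtain w A where wA: "(w,A) \<in># T'" "ys!i = w + A *v (t *\<^sub>R h)" unfolding aff_def by auto
      have "t * norm (L *v h - L' *v h) \<le> norm (xs!i - ys!i)"
      proof (cases "w = v")
        case True
        then have "A = L'" using cons wA(1) vL' unfolding consistent_def by fastforce
        then have "xs!i - ys!i = t *\<^sub>R (L *v h - L' *v h)"
          using i wA True by (simp add: matrix_vector_mult_scaleR algebra_simps)
        then show ?thesis using t by simp
      next
        case False
        have "v \<in> ?P" using vL by force
        moreover have "w \<in> ?P" using wA(1) fst by (metis image_eqI fst_conv set_image_mset)
        ultimately have "s \<le> dist v w" using s(2)[rule_format, of v w] False by blast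
        then have sv: "s \<le> norm (v - w)" by (simp add: dist_norm)
        have "v - w = (xs!i - ys!i) - t *\<^sub>R (L *v h - A *v h)"
          using i wA by (simp add: matrix_vector_mult_scaleR algebra_simps)
        then have "norm (v - w) \<le> norm (xs!i - ys!i) + norm (t *\<^sub>R (L *v h - A *v h))"
          by (metis norm_triangle_ineq4)
        then have 1: "s \<le> norm (xs!i - ys!i) + t * norm (L *v h - A *v h)"
          using t sv by simp
        have "norm (L *v h - A *v h) \<le> 2 * Mh"
          using Mh[of v L] Mh[of w A] vL wA(1) norm_triangle_ineq4[of "L *v h" "A *v h"] by auto
        then have 2: "t * norm (L *v h - A *v h) \<le> t * (2 * Mh)" using t by (intro mult_left_mono) auto
        have "norm (L *v h - L' *v h) \<le> 2 * Mh"
          using Mh[of v L] Mh[of v L'] vL vL' norm_triangle_ineq4[of "L *v h" "L' *v h"] by auto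
        then have 3: "t * norm (L *v h - L' *v h) \<le> t * (2 * Mh)" using t by (intro mult_left_mono) auto
        have 4: "4 * (t * Mh) < s" using t Mh0 unfolding t0_def by (simp add: field_simps)
        show ?thesis using 1 2 3 4 by linarith
      qed
      also have "\<dots> \<le> gsum xs ys" by (rule gsum_ge_term[OF i(1)])
      finally show "t * norm (L *v h - L' *v h) \<le> gsum xs ys" .
    qed
  qed
qed


lemma aff_zero_T:
  "aff (image_mset (\<lambda>(w,A). (w, 0::mat2)) T) u = image_mset fst T"
  unfolding aff_def by (simp add: multiset.map_comp comp_def case_prod_beta)

lemma qdiff_bound:
  assumes d: "is_qdiff f x0 T" and r: "r > 0"
    and sz: "\<forall>x\<in>ball x0 r. size (f x) = size (f x0)"
    and lip: "\<forall>x\<in>ball x0 r. Gdist (f x) (f x0) \<le> K * dist x x0"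
    and vL: "(v,L) \<in># T"
  shows "norm (L *v h) \<le> K * norm h"
proof (cases "h = 0")
  case True
  then show ?thesis by simp
next
  case False
  then have nh: "norm h > 0" by simp
  have fx0: "image_mset fst T = f x0" and cT: "consistent T" using d unfolding is_qdiff_alt by auto
  show ?thesis
  proof (rule field_le_epsilon)
    fix e :: real assume e: "e > 0"
    let ?T' = "image_mset (\<lambda>(w,A). (w, 0::mat2)) T"
    have fstT: "image_mset fst T = image_mset fst ?T'" by (simp add: multiset.map_comp comp_def case_prod_beta)
    have cons: "consistent ?T'" by (auto simp: consistent_def)
    have vT': "(v,0) \<in># ?T'" using vL by force
    obtain t0 where t0: "t0 > 0" "\<forall>t. 0 < t \<and> t < t0 \<longrightarrow> t * norm (L *v h - 0 *v h) \<le> Gdist (aff T (t *\<^sub>R h)) (aff ?T' (t *\<^sub>R h))"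
      using KL[OF fstT vL vT' cons, of h] by blast
    obtain r' where r': "r' > 0" "\<forall>x. x \<noteq> x0 \<and> norm (x - x0) < r' \<longrightarrow> Gdist (f x) (aff T (x - x0)) < (e / norm h) * norm (x - x0)"
      using qdiff_lim[OF d, of "e / norm h"] e nh by auto
    define t where "t = min t0 (min (r / norm h) (r' / norm h)) / 2"
    have t: "0 < t" "t < t0" "t * norm h < r" "t * norm h < r'"
      using t0 r r' nh unfolding t_def by (auto simp: field_simps min_def)
    define x where "x = x0 + t *\<^sub>R h"
    have xx: "x - x0 = t *\<^sub>R h" "x \<noteq> x0" "norm (x - x0) = t * norm h" using t False by (auto simp: x_def)
    have "norm (x0 - x) = norm (x - x0)" by (rule norm_minus_commute)
    then have xb: "x \<in> ball x0 r" using xx t by (simp add: dist_norm)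
    have s1: "size (f x) = size T" using sz xb fx0 by (metis size_image_mset)
    have "t * norm (L *v h) \<le> Gdist (aff T (t *\<^sub>R h)) (f x0)"
      using t0(2) t aff_zero_T[of T] fx0 by simp
    also have "\<dots> \<le> Gdist (aff T (t *\<^sub>R h)) (f x) + Gdist (f x) (f x0)"
      by (rule Gdist_triangle) (use s1 sz xb in auto)
    also have "Gdist (aff T (t *\<^sub>R h)) (f x) = Gdist (f x) (aff T (x - x0))"
      using s1 xx by (simp add: Gdist_sym)
    also have "\<dots> < (e / norm h) * (t * norm h)" using r'(2) xx t by auto
    also have "(e / norm h) * (t * norm h) = t * e" using nh by simp
    also have "Gdist (f x) (f x0) \<le> K * (t * norm h)" using lip[rule_format, OF xb] xx(3) by (simp add: dist_norm)
    finally have "t * norm (L *v h) < t * (K * norm h + e)" by (simp add: algebra_simps)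
    then show "norm (L *v h) \<le> K * norm h + e" using t by simp
  qed
qed

lemma entry_bound:
  assumes "\<forall>h. norm (L *v h) \<le> K * norm h"
  shows "\<bar>L $ i $ j\<bar> \<le> K"
proof -
  have "\<bar>L $ i $ j\<bar> = \<bar>(L *v axis j 1) $ i\<bar>" by (simp add: matrix_vector_mult_basis column_def)
  also have "\<dots> \<le> norm (L *v axis j 1)" by (rule component_le_norm_cart)
  also have "\<dots> \<le> K" using assms[rule_format, of "axis j 1"] by simp
  finally show ?thesis .
qed

lemma widx_eq: "widx = {(1,2),(1,3),(1,4),(2,3),(2,4),(3,4)}"
  unfolding widx_def by auto

lemma wnorm_LM: "wnorm (LM X) = sqrt (1 + (X$1$2)^2 + (X$2$2)^2 + (X$1$1)^2 + (X$2$1)^2 + (X$1$1*X$2$2 - X$2$1*X$1$2)^2)"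
  unfolding wnorm_def widx_eq LM_def wedge_def ev_def by (simp add: algebra_simps power2_eq_square)

lemma wnorm_LM_bound:
  assumes "\<And>i j. \<bar>X $ i $ j\<bar> \<le> K"
  shows "wnorm (LM X) \<le> 1 + 2 * K^2"
proof -
  have K: "0 \<le> K" using assms[of 1 1] by linarith
  have sq: "(X$i$j)^2 \<le> K^2" for i j using power_mono[OF assms[of i j] abs_ge_zero, of 2] by simp
  have "\<bar>X$1$1*X$2$2 - X$2$1*X$1$2\<bar> \<le> \<bar>X$1$1\<bar>*\<bar>X$2$2\<bar> + \<bar>X$2$1\<bar>*\<bar>X$1$2\<bar>"
    by (simp add: abs_mult[symmetric] abs_triangle_ineq4)
  also have "\<dots> \<le> K*K + K*K" using assms K by (intro add_mono mult_mono) auto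
  finally have "\<bar>X$1$1*X$2$2 - X$2$1*X$1$2\<bar> \<le> 2*K^2" by (simp add: power2_eq_square)
  then have "(X$1$1*X$2$2 - X$2$1*X$1$2)^2 \<le> (2*K^2)^2"
    using power_mono[of "\<bar>X$1$1*X$2$2 - X$2$1*X$1$2\<bar>" "2*K^2" 2] by simp
  then have "1 + (X$1$2)^2 + (X$2$2)^2 + (X$1$1)^2 + (X$2$1)^2 + (X$1$1*X$2$2 - X$2$1*X$1$2)^2 \<le> (1 + 2*K^2)^2"
    using sq[of 1 2] sq[of 2 2] sq[of 1 1] sq[of 2 1] by (simp add: power2_eq_square algebra_simps)
  then show ?thesis unfolding wnorm_LM using K by (simp add: real_sqrt_le_iff')
qed

lemma psi_le: "psi eps d X \<le> wnorm (LM X)"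
  unfolding psi_def wnorm_def by (auto intro: sum_nonneg)

lemma sum_mset_bound:
  assumes "\<forall>x\<in>#M. g x \<le> (c::real)"
  shows "sum_mset (image_mset g M) \<le> real (size M) * c"
  using assms by (induct M) (auto simp: algebra_simps)

lemma psibar_qgrad_bound:
  assumes U: "open U" "x0 \<in> U" and sz: "\<forall>x\<in>U. size (f x) = n"
    and lip: "\<forall>x\<in>U. \<forall>y\<in>U. Gdist (f x) (f y) \<le> K * dist x y" and K: "K \<ge> 0"
  shows "psibar eps d (qgrad f x0) \<le> real n * (1 + 2*K^2)"
proof (cases "\<exists>T. is_qdiff f x0 T")
  case True
  define T where "T = (SOME T. is_qdiff f x0 T)"
  have dT: "is_qdiff f x0 T" using True someI_ex unfolding T_def by metis
  have qg: "qgrad f x0 = image_mset snd T" unfolding qgrad_def T_def using True by simp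
  obtain r where r: "r > 0" "ball x0 r \<subseteq> U" using U open_contains_ball by blast
  have each: "psi eps d X \<le> 1 + 2*K^2" if "X \<in># image_mset snd T" for X
  proof -
    have "X \<in> snd ` set_mset T" using that by simp
    then obtain u where u: "u \<in># T" "X = snd u" by blast
    obtain v where vX: "(v,X) \<in># T" using u by (metis prod.collapse)
    have "norm (X *v h) \<le> K * norm h" for h
      by (rule qdiff_bound[OF dT r(1) _ _ vX]) (use r sz lip U in \<open>auto simp: subset_eq\<close>)
    then have "\<bar>X $ i $ j\<bar> \<le> K" for i j by (intro entry_bound) auto
    then have "wnorm (LM X) \<le> 1 + 2*K^2" by (rule wnorm_LM_bound)
    then show ?thesis using psi_le[of eps d X] by linarith
  qed
  have "size T = n" using dT sz U unfolding is_qdiff_alt by (metis size_image_mset)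
  then show ?thesis unfolding psibar_def qg using sum_mset_bound[of "image_mset snd T" "psi eps d" "1 + 2*K^2"] each
    by simp
next
  case False
  then have "qgrad f x0 = {#}" unfolding qgrad_def by auto
  then show ?thesis unfolding psibar_def using K by simp
qed


lemma consistent_repr:
  assumes "consistent T"
  shows "T = image_mset (\<lambda>w. (w, SOME L. (w,L) \<in># T)) (image_mset fst T)"
proof -
  have "image_mset (\<lambda>w. (w, SOME L. (w,L) \<in># T)) (image_mset fst T) = image_mset (\<lambda>u. (fst u, SOME L. (fst u,L) \<in># T)) T"
    by (simp add: multiset.map_comp comp_def)
  also have "\<dots> = image_mset id T"
  proof (rule image_mset_cong)
    fix u assume u: "u \<in># T"
    have ex: "\<exists>L. (fst u, L) \<in># T" using u by (metis prod.collapse)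
    have "(fst u, SOME L. (fst u,L) \<in># T) \<in># T" using someI_ex[OF ex] .
    then have "(SOME L. (fst u,L) \<in># T) = snd u" using assms u unfolding consistent_def
      by (metis fst_conv snd_conv)
    then show "(fst u, SOME L. (fst u,L) \<in># T) = id u" by simp
  qed
  finally show ?thesis by simp
qed

lemma qdiff_unique:
  assumes d1: "is_qdiff f x0 T1" and d2: "is_qdiff f x0 T2" and r: "r > 0"
    and sz: "\<forall>x\<in>ball x0 r. size (f x) = size (f x0)"
  shows "T1 = T2"
proof -
  have f1: "image_mset fst T1 = f x0" and c1: "consistent T1" using d1 unfolding is_qdiff_alt by auto
  have f2: "image_mset fst T2 = f x0" and c2: "consistent T2" using d2 unfolding is_qdiff_alt by auto
  have LL: "L1 = L2" if v1: "(v,L1) \<in># T1" and v2: "(v,L2) \<in># T2" for v L1 L2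
  proof -
    have "L1 *v h = L2 *v h" for h
    proof (cases "h = 0")
      case True then show ?thesis by simp
    next
      case False
      then have nh: "norm h > 0" by simp
      have "norm (L1 *v h - L2 *v h) \<le> 0"
      proof (rule field_le_epsilon)
        fix e :: real assume e: "e > 0"
        obtain t0 where t0: "t0 > 0" "\<forall>t. 0 < t \<and> t < t0 \<longrightarrow> t * norm (L1 *v h - L2 *v h) \<le> Gdist (aff T1 (t *\<^sub>R h)) (aff T2 (t *\<^sub>R h))"
          using KL[of T1 T2 v L1 L2 h] f1 f2 v1 v2 c2 by auto
        obtain r1 where r1: "r1 > 0" "\<forall>x. x \<noteq> x0 \<and> norm (x - x0) < r1 \<longrightarrow> Gdist (f x) (aff T1 (x - x0)) < (e / (2 * norm h)) * norm (x - x0)"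
          using qdiff_lim[OF d1, of "e / (2 * norm h)"] e nh by auto
        obtain r2 where r2: "r2 > 0" "\<forall>x. x \<noteq> x0 \<and> norm (x - x0) < r2 \<longrightarrow> Gdist (f x) (aff T2 (x - x0)) < (e / (2 * norm h)) * norm (x - x0)"
          using qdiff_lim[OF d2, of "e / (2 * norm h)"] e nh by auto
        define t where "t = min t0 (min (r / norm h) (min (r1 / norm h) (r2 / norm h))) / 2"
        have t: "0 < t" "t < t0" "t * norm h < r" "t * norm h < r1" "t * norm h < r2"
          using t0 r r1 r2 nh unfolding t_def by (auto simp: field_simps min_def)
        define x where "x = x0 + t *\<^sub>R h"
        have xx: "x - x0 = t *\<^sub>R h" "x \<noteq> x0" "norm (x - x0) = t * norm h" using t False by (auto simp: x_def)
        have "norm (x0 - x) = norm (x - x0)" by (rule norm_minus_commute)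
        then have xb: "x \<in> ball x0 r" using xx t by (simp add: dist_norm)
        have s1: "size (f x) = size T1" "size T2 = size T1" using sz xb f1 f2 by (metis size_image_mset)+
        have "t * norm (L1 *v h - L2 *v h) \<le> Gdist (aff T1 (t *\<^sub>R h)) (aff T2 (t *\<^sub>R h))"
          using t0(2) t by simp
        also have "\<dots> \<le> Gdist (aff T1 (t *\<^sub>R h)) (f x) + Gdist (f x) (aff T2 (t *\<^sub>R h))"
          by (rule Gdist_triangle) (use s1 in auto)
        also have "Gdist (aff T1 (t *\<^sub>R h)) (f x) = Gdist (f x) (aff T1 (x - x0))"
          using s1 xx by (simp add: Gdist_sym)
        also have "\<dots> < (e / (2 * norm h)) * (t * norm h)" using r1(2) xx t by auto
        also have "Gdist (f x) (aff T2 (t *\<^sub>R h)) < (e / (2 * norm h)) * (t * norm h)" using r2(2) xx t by auto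
        finally have "t * norm (L1 *v h - L2 *v h) < t * e" using nh by (simp add: field_simps)
        then show "norm (L1 *v h - L2 *v h) \<le> 0 + e" using t by simp
      qed
      then show ?thesis by simp
    qed
    then show ?thesis by (simp add: matrix_eq)
  qed
  have "image_mset (\<lambda>w. (w, SOME L. (w,L) \<in># T1)) (f x0) = image_mset (\<lambda>w. (w, SOME L. (w,L) \<in># T2)) (f x0)"
  proof (rule image_mset_cong)
    fix w assume "w \<in># f x0"
    then have e1: "\<exists>L. (w,L) \<in># T1" and e2: "\<exists>L. (w,L) \<in># T2" using f1 f2
      by (metis (no_types, lifting) imageE prod.collapse set_image_mset)+
    show "(w, SOME L. (w,L) \<in># T1) = (w, SOME L. (w,L) \<in># T2)"
      using LL[OF someI_ex[OF e1] someI_ex[OF e2]] by simp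
  qed
  then show ?thesis using consistent_repr[OF c1] consistent_repr[OF c2] f1 f2 by metis
qed

lemma qdiff_local:
  assumes d: "is_qdiff f x0 T" and r: "r > 0" and eq: "\<forall>x\<in>ball x0 r. g x = f x"
  shows "is_qdiff g x0 T"
proof -
  have g0: "g x0 = f x0" using eq r by auto
  have ev: "eventually (\<lambda>x. Gdist (f x) (aff T (x - x0)) / norm (x - x0) = Gdist (g x) (aff T (x - x0)) / norm (x - x0)) (at x0)"
    unfolding eventually_at using r eq by (intro exI[of _ r]) (auto simp: dist_commute)
  show ?thesis using d g0 tendsto_cong[OF ev] unfolding is_qdiff_alt by simp
qed

lemma qdiff_scale:
  assumes d: "is_qdiff g x0 T" and c: "c > 0" and r: "r > 0"
    and sz: "\<forall>x\<in>ball x0 r. size (g x) = size (g x0)"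
  shows "is_qdiff (\<lambda>z. image_mset (scaleR (1/c)) (g (c *\<^sub>R z))) (x0 /\<^sub>R c) (image_mset (\<lambda>(v,L). (v /\<^sub>R c, L)) T)"
proof -
  let ?T = "image_mset (\<lambda>(v,L). (v /\<^sub>R c, L)) T"
  let ?g = "\<lambda>z. image_mset (scaleR (1/c)) (g (c *\<^sub>R z))"
  have f0: "image_mset fst T = g x0" and c0: "consistent T" using d unfolding is_qdiff_alt by auto
  have 1: "image_mset fst ?T = ?g (x0 /\<^sub>R c)"
    using f0[symmetric] c by (simp add: multiset.map_comp comp_def case_prod_beta inverse_eq_divide)
  have 2: "consistent ?T" using c0 c unfolding consistent_def by auto
  have 3: "((\<lambda>z. Gdist (?g z) (aff ?T (z - x0 /\<^sub>R c)) / norm (z - x0 /\<^sub>R c)) \<longlongrightarrow> 0) (at (x0 /\<^sub>R c))"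
    unfolding LIM_eq
  proof (intro allI impI)
    fix e :: real assume e: "e > 0"
    obtain s where s: "s > 0" "\<forall>x. x \<noteq> x0 \<and> norm (x - x0) < s \<longrightarrow> Gdist (g x) (aff T (x - x0)) < e * norm (x - x0)"
      using qdiff_lim[OF d e] by blast
    show "\<exists>s>0. \<forall>z. z \<noteq> x0 /\<^sub>R c \<and> norm (z - x0 /\<^sub>R c) < s \<longrightarrow>
        norm (Gdist (?g z) (aff ?T (z - x0 /\<^sub>R c)) / norm (z - x0 /\<^sub>R c) - 0) < e"
    proof (intro exI[of _ "min s r / c"] conjI allI impI)
      show "min s r / c > 0" using s r c by simp
      fix z assume z: "z \<noteq> x0 /\<^sub>R c \<and> norm (z - x0 /\<^sub>R c) < min s r / c"
      define x where "x = c *\<^sub>R z"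
      have xz: "x - x0 = c *\<^sub>R (z - x0 /\<^sub>R c)" using c by (simp add: x_def algebra_simps)
      have nx: "norm (x - x0) = c * norm (z - x0 /\<^sub>R c)" using xz c by simp
      have nz: "norm (z - x0 /\<^sub>R c) > 0" using z by simp
      have xs: "norm (x - x0) < s" "norm (x - x0) < r" using nx z c by (auto simp: field_simps)
      have xne: "x \<noteq> x0" using nx nz c by auto
      have "norm (x0 - x) = norm (x - x0)" by (rule norm_minus_commute)
      then have xb: "x \<in> ball x0 r" using xs by (simp add: dist_norm)
      have szx: "size (g x) = size (aff T (x - x0))" using sz xb f0 by (metis size_aff size_image_mset)
      have affeq: "aff ?T (z - x0 /\<^sub>R c) = image_mset (scaleR (1/c)) (aff T (x - x0))"
        unfolding aff_def xz using c
        by (simp add: multiset.map_comp comp_def case_prod_beta matrix_vector_mult_scaleR algebra_simps inverse_eq_divide)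
      have "Gdist (?g z) (aff ?T (z - x0 /\<^sub>R c)) = Gdist (image_mset (scaleR (1/c)) (g x)) (image_mset (scaleR (1/c)) (aff T (x - x0)))"
        using affeq x_def by simp
      also have "\<dots> \<le> (1/c) * Gdist (g x) (aff T (x - x0))"
        by (rule Gdist_map[OF szx]) (use c in \<open>auto simp: scaleR_diff_right[symmetric]\<close>)
      finally have le: "Gdist (?g z) (aff ?T (z - x0 /\<^sub>R c)) \<le> (1/c) * Gdist (g x) (aff T (x - x0))" .
      have ge: "0 \<le> Gdist (?g z) (aff ?T (z - x0 /\<^sub>R c))"
        by (rule Gdist_nonneg) (use szx affeq x_def in simp)
      have "Gdist (g x) (aff T (x - x0)) < e * norm (x - x0)" using s(2) xne xs by auto
      then have "(1/c) * Gdist (g x) (aff T (x - x0)) < e * norm (z - x0 /\<^sub>R c)"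
        using nx c by (simp add: field_simps)
      then have "Gdist (?g z) (aff ?T (z - x0 /\<^sub>R c)) < e * norm (z - x0 /\<^sub>R c)"
        using le by linarith
      then have "Gdist (?g z) (aff ?T (z - x0 /\<^sub>R c)) / norm (z - x0 /\<^sub>R c) < e"
        using nz by (simp add: pos_divide_less_eq)
      then show "norm (Gdist (?g z) (aff ?T (z - x0 /\<^sub>R c)) / norm (z - x0 /\<^sub>R c) - 0) < e"
        using ge nz by simp
    qed
  qed
  show ?thesis unfolding is_qdiff_alt using 1 2 3 by blast
qed

definition mx :: "pt2 \<Rightarrow> real" where "mx x = max \<bar>x$1\<bar> \<bar>x$2\<bar>"

lemma mx_lip: "\<bar>mx x - mx y\<bar> \<le> norm (x - y)"
proof -
  have c1: "\<bar>\<bar>x$1\<bar> - \<bar>y$1\<bar>\<bar> \<le> norm (x - y)"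
    using component_le_norm_cart[of "x - y" 1] abs_triangle_ineq3[of "x$1" "y$1"] by simp
  have c2: "\<bar>\<bar>x$2\<bar> - \<bar>y$2\<bar>\<bar> \<le> norm (x - y)"
    using component_le_norm_cart[of "x - y" 2] abs_triangle_ineq3[of "x$2" "y$2"] by simp
  have ml: "\<bar>max a1 a2 - max b1 b2\<bar> \<le> N" if "\<bar>a1 - b1\<bar> \<le> N" "\<bar>a2 - b2\<bar> \<le> (N::real)" for a1 a2 b1 b2 N
    using that by (auto simp: max_def abs_le_iff)
  show ?thesis unfolding mx_def by (rule ml[OF c1 c2])
qed

lemma mx_cont: "continuous_on S mx"
  unfolding mx_def by (intro continuous_intros)

lemma mx_scale: "mx (c *\<^sub>R x) = \<bar>c\<bar> * mx x"
  unfolding mx_def by (simp add: abs_mult max_mult_distrib_left)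

lemma mx_nonneg: "0 \<le> mx x" unfolding mx_def by simp

lemma norm_mx: "norm x \<le> 2 * mx x"
proof -
  have "norm x \<le> (\<Sum>i\<in>UNIV. \<bar>x$i\<bar>)" by (rule norm_le_l1_cart)
  also have "\<dots> = \<bar>x$1\<bar> + \<bar>x$2\<bar>" by (simp add: sum_2)
  also have "\<dots> \<le> 2 * mx x" unfolding mx_def by simp
  finally show ?thesis .
qed

lemma box_mx: "x \<in> box (\<chi> i. - a) (\<chi> i. a) \<longleftrightarrow> mx x < a"
  unfolding mem_box_cart mx_def forall_2 by auto

lemma cbox_mx: "x \<in> cbox (\<chi> i. - a) (\<chi> i. a) \<longleftrightarrow> mx x \<le> a"
  unfolding mem_box_cart mx_def forall_2 by auto

lemma box_mx_set: "box (\<chi> i. - a) (\<chi> i. a) = {x. mx x < a}"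
  using box_mx by blast

lemma cbox_mx_set: "cbox (\<chi> i. - a) (\<chi> i. a) = {x. mx x \<le> a}"
  using cbox_mx by blast

lemma Dsq_box: "Dsq = box (\<chi> i. - (1/2)) (\<chi> i. 1/2)"
  unfolding Dsq_def by simp

lemma Dsq_mx: "Dsq = {x. mx x < 1/2}"
  unfolding Dsq_box using box_mx_set[of "1/2"] by simp

lemma closure_Dsq: "closure Dsq = {x. mx x \<le> 1/2}"
proof -
  have "(0::pt2) \<in> Dsq" unfolding Dsq_mx mx_def by simp
  then have "box (\<chi> i. - (1/2::real)) (\<chi> i. 1/2) \<noteq> ({}::pt2 set)" unfolding Dsq_box by auto
  then show ?thesis unfolding Dsq_box using closure_box cbox_mx_set[of "1/2"] by simp
qed

lemma open_Dsq: "open Dsq" unfolding Dsq_def by (rule open_box)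

lemma frontier_Dsq: "frontier Dsq = {x. mx x = 1/2}"
proof -
  have "frontier Dsq = closure Dsq - Dsq" by (simp add: frontier_def interior_open[OF open_Dsq])
  also have "\<dots> = {x. mx x = 1/2}" unfolding closure_Dsq by (auto simp: Dsq_mx)
  finally show ?thesis .
qed

lemma emeasure_box_sym: "0 \<le> a \<Longrightarrow> emeasure lborel (box (\<chi> i. - a) (\<chi> i. a) :: pt2 set) = ennreal ((2*a)^2)"
  by (simp add: emeasure_lborel_box_eq Basis_vec_def cart_eq_inner_axis[symmetric] prod.UNION_disjoint
      inner_axis axis_eq_axis power_mult_distrib)

lemma emeasure_cbox_sym: "0 \<le> a \<Longrightarrow> emeasure lborel (cbox (\<chi> i. - a) (\<chi> i. a) :: pt2 set) = ennreal ((2*a)^2)"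
  by (simp add: emeasure_lborel_cbox_eq Basis_vec_def cart_eq_inner_axis[symmetric] prod.UNION_disjoint
      inner_axis axis_eq_axis power_mult_distrib)

lemma nn_integral_scale_le:
  fixes G :: "pt2 \<Rightarrow> ennreal" assumes c: "0 < c"
  shows "(\<integral>\<^sup>+x. G (x /\<^sub>R c) \<partial>lborel) \<le> ennreal (c^2) * (\<integral>\<^sup>+y. G y \<partial>lborel)"
proof -
  have "(\<integral>\<^sup>+x. G (x /\<^sub>R c) \<partial>lborel) = (SUP g \<in> {g. simple_function lborel g \<and> g \<le> (\<lambda>x. G (x /\<^sub>R c))}. integral\<^sup>S lborel g)"
    by (simp add: nn_integral_def)
  also have "\<dots> \<le> ennreal (c^2) * (\<integral>\<^sup>+y. G y \<partial>lborel)"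
  proof (rule SUP_least)
    fix g assume g: "g \<in> {g. simple_function lborel g \<and> g \<le> (\<lambda>x. G (x /\<^sub>R c))}"
    then have sf: "simple_function lborel g" and le: "\<And>x. g x \<le> G (x /\<^sub>R c)" by (auto simp: le_fun_def)
    have gm: "g \<in> borel_measurable lborel" by (rule borel_measurable_simple_function[OF sf])
    then have gm': "g \<in> borel_measurable borel" by simp
    have meas: "(\<lambda>x. 0 + c *\<^sub>R x) \<in> lborel \<rightarrow>\<^sub>M (borel :: pt2 measure)" by simp
    have "integral\<^sup>S lborel g = (\<integral>\<^sup>+x. g x \<partial>lborel)" by (simp add: nn_integral_eq_simple_integral[OF sf])
    also have "\<dots> = (\<integral>\<^sup>+x. g x \<partial>(density (distr lborel borel (\<lambda>x. 0 + c *\<^sub>R x)) (\<lambda>_. ennreal (\<bar>c\<bar>^DIM(pt2)))))"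
      using lborel_affine[of c "0::pt2"] c by simp
    also have "\<dots> = (\<integral>\<^sup>+x. ennreal (\<bar>c\<bar>^DIM(pt2)) * g x \<partial>(distr lborel borel (\<lambda>x. 0 + c *\<^sub>R x)))"
      by (rule nn_integral_density) (use gm' in auto)
    also have "\<dots> = (\<integral>\<^sup>+x. ennreal (\<bar>c\<bar>^DIM(pt2)) * g (0 + c *\<^sub>R x) \<partial>lborel)"
      by (rule nn_integral_distr[OF meas]) (use gm' in auto)
    also have "\<dots> = ennreal (c^2) * (\<integral>\<^sup>+x. g (c *\<^sub>R x) \<partial>lborel)"
      using c gm' by (simp add: nn_integral_cmult)
    also have "\<dots> \<le> ennreal (c^2) * (\<integral>\<^sup>+y. G y \<partial>lborel)"
      using le[of "c *\<^sub>R _"] c by (intro mult_left_mono nn_integral_mono) auto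
    finally show "integral\<^sup>S lborel g \<le> ennreal (c^2) * (\<integral>\<^sup>+y. G y \<partial>lborel)" .
  qed
  finally show ?thesis .
qed

lemma ennreal_le_minus_add: "(a::ennreal) \<le> (a - b) + b"
proof (cases "b \<le> a")
  case True then show ?thesis by (simp add: diff_add_cancel_ennreal)
next
  case False then show ?thesis by (simp add: add_increasing)
qed

lemma nn_integral_add_le_meas:
  assumes v: "v \<in> borel_measurable M"
  shows "(\<integral>\<^sup>+x. u x + v x \<partial>M) \<le> (\<integral>\<^sup>+x. u x \<partial>M) + (\<integral>\<^sup>+x. v x \<partial>M)"
proof -
  have "(\<integral>\<^sup>+x. u x + v x \<partial>M) = (SUP g \<in> {g. simple_function M g \<and> g \<le> (\<lambda>x. u x + v x) \<and> (\<forall>x. g x < top)}. integral\<^sup>S M g)"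
    by (rule nn_integral_def_finite)
  also have "\<dots> \<le> (\<integral>\<^sup>+x. u x \<partial>M) + (\<integral>\<^sup>+x. v x \<partial>M)"
  proof (rule SUP_least)
    fix g assume g: "g \<in> {g. simple_function M g \<and> g \<le> (\<lambda>x. u x + v x) \<and> (\<forall>x. g x < top)}"
    then have sf: "simple_function M g" and le: "\<And>x. g x \<le> u x + v x" and fin: "\<And>x. g x < top"
      by (auto simp: le_fun_def)
    have gm: "g \<in> borel_measurable M" by (rule borel_measurable_simple_function[OF sf])
    have "integral\<^sup>S M g = (\<integral>\<^sup>+x. g x \<partial>M)" by (simp add: nn_integral_eq_simple_integral[OF sf])
    also have "\<dots> \<le> (\<integral>\<^sup>+x. (g x - v x) + v x \<partial>M)"
      by (intro nn_integral_mono) (rule ennreal_le_minus_add)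
    also have "\<dots> = (\<integral>\<^sup>+x. g x - v x \<partial>M) + (\<integral>\<^sup>+x. v x \<partial>M)"
      by (rule nn_integral_add) (use gm v in auto)
    also have "(\<integral>\<^sup>+x. g x - v x \<partial>M) \<le> (\<integral>\<^sup>+x. u x \<partial>M)"
    proof (intro nn_integral_mono)
      fix x
      show "g x - v x \<le> u x" using le[of x] fin[of x] by (auto simp: ennreal_minus_le_iff add.commute)
    qed
    finally show "integral\<^sup>S M g \<le> (\<integral>\<^sup>+x. u x \<partial>M) + (\<integral>\<^sup>+x. v x \<partial>M)" by (simp add: add_right_mono)
  qed
  finally show ?thesis .
qed

lemma norm_mat_vec: "norm ((X::mat2) *v v) \<le> norm X * norm v"
proof -
  have comp: "(X *v v) $ i = X $ i \<bullet> v" for i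
    by (simp add: matrix_vector_mult_def inner_vec_def)
  have "norm (X *v v) = L2_set (\<lambda>i. norm ((X *v v) $ i)) UNIV" by (simp add: norm_vec_def)
  also have "\<dots> \<le> L2_set (\<lambda>i. norm v * norm (X $ i)) UNIV"
  proof (rule L2_set_mono)
    fix i show "norm ((X *v v) $ i) \<le> norm v * norm (X $ i)"
      using Cauchy_Schwarz_ineq2[of "X $ i" v] by (simp add: comp mult.commute)
  qed simp
  also have "\<dots> = norm v * norm X"
    by (simp add: norm_vec_def L2_set_right_distrib)
  finally show ?thesis by (simp add: mult.commute)
qed

lemma image_mset_sum_set: "finite S \<Longrightarrow> image_mset f (\<Sum>z\<in>S. A z) = (\<Sum>z\<in>S. image_mset f (A z))"
  by (induct S rule: finite_induct) auto

lemma rep_plus: "replicate_mset (a + b) w = replicate_mset a w + replicate_mset b w"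
  by (induct a) auto

lemma sum_replicate_mset: "finite S \<Longrightarrow> (\<Sum>z\<in>S. replicate_mset (n z) w) = replicate_mset (\<Sum>z\<in>S. n z) w"
  by (induct S rule: finite_induct) (auto simp: rep_plus)


lemma glue_lip:
  fixes f :: "pt2 \<Rightarrow> 'a::real_normed_vector multiset" and m :: "pt2 \<Rightarrow> real"
  assumes S: "convex S" and m: "continuous_on S m"
    and sz: "\<forall>x\<in>S. size (f x) = n"
    and L1: "\<forall>x\<in>S. \<forall>y\<in>S. m x \<le> c \<and> m y \<le> c \<longrightarrow> Gdist (f x) (f y) \<le> K * dist x y"
    and L2: "\<forall>x\<in>S. \<forall>y\<in>S. c \<le> m x \<and> c \<le> m y \<longrightarrow> Gdist (f x) (f y) \<le> K * dist x y"
  shows "\<forall>x\<in>S. \<forall>y\<in>S. Gdist (f x) (f y) \<le> K * dist x y"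
proof (intro ballI)
  fix x y assume x: "x \<in> S" and y: "y \<in> S"
  show "Gdist (f x) (f y) \<le> K * dist x y"
  proof (cases "(m x \<le> c \<and> m y \<le> c) \<or> (c \<le> m x \<and> c \<le> m y)")
    case True then show ?thesis using L1 L2 x y by auto
  next
    case False
    define \<gamma> where "\<gamma> t = (1 - t) *\<^sub>R x + t *\<^sub>R y" for t :: real
    have \<gamma>S: "\<gamma> t \<in> S" if "t \<in> {0..1}" for t
      using that S x y unfolding \<gamma>_def convex_def by auto
    have gc: "continuous_on {0..1} \<gamma>" unfolding \<gamma>_def by (intro continuous_intros)
    have sub: "\<gamma> ` {0..1} \<subseteq> S" using \<gamma>S by auto
    have cont: "continuous_on {0..1} (\<lambda>t. m (\<gamma> t))"
      by (rule continuous_on_compose2[OF m gc sub])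
    have g0: "\<gamma> 0 = x" and g1: "\<gamma> 1 = y" by (auto simp: \<gamma>_def)
    obtain t where t: "0 \<le> t" "t \<le> 1" "m (\<gamma> t) = c"
    proof (cases "m x \<le> c")
      case True
      then have "c \<le> m y" using False by auto
      then show ?thesis using IVT'[of "\<lambda>t. m (\<gamma> t)" 0 c 1] cont True g0 g1 that by auto
    next
      case F: False
      then have "m y \<le> c" using False by auto
      then show ?thesis using IVT2'[of "\<lambda>t. m (\<gamma> t)" 1 c 0] cont F g0 g1 that by auto
    qed
    let ?w = "\<gamma> t"
    have w: "?w \<in> S" using \<gamma>S t by auto
    have dxw: "dist x ?w = t * dist x y"
    proof -
      have "x - ?w = t *\<^sub>R (x - y)" by (simp add: \<gamma>_def algebra_simps)
      then show ?thesis using t by (simp add: dist_norm)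
    qed
    have dwy: "dist ?w y = (1 - t) * dist x y"
    proof -
      have "?w - y = (1 - t) *\<^sub>R (x - y)" by (simp add: \<gamma>_def algebra_simps)
      then show ?thesis using t by (simp add: dist_norm)
    qed
    have "Gdist (f x) (f y) \<le> Gdist (f x) (f ?w) + Gdist (f ?w) (f y)"
      by (rule Gdist_triangle) (use sz x y w in auto)
    also have "Gdist (f x) (f ?w) \<le> K * dist x ?w"
      using L1 L2 x w t(3) by (cases "m x \<le> c") auto
    also have "Gdist (f ?w) (f y) \<le> K * dist ?w y"
      using L1 L2 y w t(3) by (cases "m y \<le> c") auto
    also have "K * dist x ?w + K * dist ?w y = K * (dist x ?w + dist ?w y)" by (simp add: algebra_simps)
    also have "dist x ?w + dist ?w y = dist x y" using dxw dwy by (simp add: algebra_simps)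
    finally show ?thesis by simp
  qed
qed


lemma qlip_D:
  assumes "qlip q S f"
  shows "\<exists>L\<ge>0. \<forall>x\<in>S. \<forall>y\<in>S. Gdist (f x) (f y) \<le> L * dist x y"
proof -
  obtain L where L: "\<forall>x\<in>S. \<forall>y\<in>S. Gdist (f x) (f y) \<le> L * dist x y" using assms unfolding qlip_def by blast
  have "\<forall>x\<in>S. \<forall>y\<in>S. Gdist (f x) (f y) \<le> max L 0 * dist x y"
    using L by (metis (no_types, opaque_lifting) dual_order.trans le_max_iff_disj mult_right_mono zero_le_dist order.refl)
  then show ?thesis by (intro exI[of _ "max L 0"]) auto
qed

lemma psibar_nonneg: "0 \<le> psibar eps d Y"
proof -
  have "\<forall>X\<in>#Y. 0 \<le> psi eps d X" unfolding psi_def wnorm_def by (auto intro: sum_nonneg)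
  then show ?thesis unfolding psibar_def by (induct Y) auto
qed

lemma qgrad_scale_le:
  assumes c: "0 < c" and U: "open U" "x0 \<in> U" and gU: "\<forall>x\<in>U. g x = image_mset (scaleR c) (f (x /\<^sub>R c))"
    and szg: "\<forall>x\<in>U. size (g x) = n" and V: "open V" "x0 /\<^sub>R c \<in> V" and szf: "\<forall>y\<in>V. size (f y) = n"
  shows "psibar eps d (qgrad g x0) \<le> psibar eps d (qgrad f (x0 /\<^sub>R c))"
proof (cases "\<exists>T. is_qdiff g x0 T")
  case True
  define T where "T = (SOME T. is_qdiff g x0 T)"
  have dT: "is_qdiff g x0 T" using True someI_ex unfolding T_def by metis
  obtain r where r: "r > 0" "ball x0 r \<subseteq> U" using U open_contains_ball by blast
  have szb: "\<forall>x\<in>ball x0 r. size (g x) = size (g x0)" using szg r U by auto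
  have d1: "is_qdiff (\<lambda>z. image_mset (scaleR (1/c)) (g (c *\<^sub>R z))) (x0 /\<^sub>R c) (image_mset (\<lambda>(v,L). (v /\<^sub>R c, L)) T)"
    by (rule qdiff_scale[OF dT c r(1) szb])
  have eq: "\<forall>z\<in>ball (x0 /\<^sub>R c) (r / c). f z = image_mset (scaleR (1/c)) (g (c *\<^sub>R z))"
  proof
    fix z assume z: "z \<in> ball (x0 /\<^sub>R c) (r / c)"
    have "c *\<^sub>R z - x0 = c *\<^sub>R (z - x0 /\<^sub>R c)" using c by (simp add: algebra_simps)
    moreover have "dist x0 (c *\<^sub>R z) = norm (c *\<^sub>R z - x0)" by (simp add: dist_norm norm_minus_commute)
    moreover have "dist (x0 /\<^sub>R c) z = norm (z - x0 /\<^sub>R c)" by (simp add: dist_norm norm_minus_commute)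
    ultimately have "dist x0 (c *\<^sub>R z) = c * dist (x0 /\<^sub>R c) z" using c by simp
    then have "c *\<^sub>R z \<in> ball x0 r" using z c by (simp add: field_simps)
    then have "g (c *\<^sub>R z) = image_mset (scaleR c) (f z)" using gU r c by auto
    then show "f z = image_mset (scaleR (1/c)) (g (c *\<^sub>R z))" using c by (simp add: multiset.map_comp comp_def)
  qed
  have d2: "is_qdiff f (x0 /\<^sub>R c) (image_mset (\<lambda>(v,L). (v /\<^sub>R c, L)) T)"
    by (rule qdiff_local[OF d1 _ eq]) (use r c in simp)
  obtain r2 where r2: "r2 > 0" "ball (x0 /\<^sub>R c) r2 \<subseteq> V" using V open_contains_ball by blast
  have szb2: "\<forall>y\<in>ball (x0 /\<^sub>R c) r2. size (f y) = size (f (x0 /\<^sub>R c))" using szf V r2 by auto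
  have ex: "\<exists>T. is_qdiff f (x0 /\<^sub>R c) T" using d2 by blast
  have "(SOME T. is_qdiff f (x0 /\<^sub>R c) T) = image_mset (\<lambda>(v,L). (v /\<^sub>R c, L)) T"
    using qdiff_unique[OF someI_ex[OF ex] d2 r2(1) szb2] .
  then have "qgrad f (x0 /\<^sub>R c) = image_mset snd (image_mset (\<lambda>(v,L). (v /\<^sub>R c, L)) T)"
    unfolding qgrad_def using ex by simp
  also have "\<dots> = image_mset snd T" by (simp add: multiset.map_comp comp_def case_prod_beta)
  also have "\<dots> = qgrad g x0" unfolding qgrad_def T_def using True by simp
  finally show ?thesis by simp
next
  case False
  then have "qgrad g x0 = {#}" unfolding qgrad_def by auto
  then show ?thesis using psibar_nonneg[of eps d] by (simp add: psibar_def)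
qed

locale tr =
  fixes p' :: "qpt multiset" and \<pi> :: "qpt \<Rightarrow> qpt" and lam \<delta> R :: real
    and \<phi> :: "pt2 \<Rightarrow> pt2 multiset" and \<Phi> :: "qpt \<Rightarrow> pt2 \<Rightarrow> pt2 multiset"
  assumes \<Phi>lip: "\<forall>z\<in>#p'. qlip (count p' z) (closure Dsq) (\<Phi> z)"
    and \<Phi>bd: "\<forall>z\<in>#p'. \<forall>x\<in>frontier Dsq. \<Phi> z x = replicate_mset (count p' z) (fst z + snd z *v x)"
    and \<phi>sum: "\<forall>x\<in>closure Dsq. \<phi> x = (\<Sum>z\<in>set_mset p'. \<Phi> z x)"
    and \<delta>: "\<forall>z\<in>#p'. norm (z - \<pi> z) \<le> \<delta>"
    and R: "\<forall>z\<in>#p'. norm z \<le> R"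
    and lam: "0 < lam" "lam < 1"
begin

definition p2 where "p2 = image_mset \<pi> p'"
definition sf where "sf x = (2 * mx x - lam) / (1 - lam)"
definition gz where "gz z x = lam *\<^sub>R fst z + snd z *v x + sf x *\<^sub>R ((fst (\<pi> z) - lam *\<^sub>R fst z) + (snd (\<pi> z) - snd z) *v x)"
definition H where "H z x = (if 2 * mx x \<le> lam then image_mset (scaleR lam) (\<Phi> z (x /\<^sub>R lam)) else replicate_mset (count p' z) (gz z x))"
definition Phi2 where "Phi2 y x = (\<Sum>z\<in>{z\<in>set_mset p'. \<pi> z = y}. H z x)"
definition phi2 where "phi2 x = (\<Sum>y\<in>set_mset p2. Phi2 y x)"
definition MM where "MM = 3*R + \<delta> + 4*\<delta>/(1-lam)"

lemma set_p2: "set_mset p2 = \<pi> ` set_mset p'"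
  unfolding p2_def by simp

lemma phi2_eq: "phi2 x = (\<Sum>z\<in>set_mset p'. H z x)"
  unfolding phi2_def Phi2_def by (rule sum.group) (auto simp: set_p2)

lemma count_p2: "count p2 y = (\<Sum>z\<in>{z\<in>set_mset p'. \<pi> z = y}. count p' z)"
proof -
  have "{z\<in>set_mset p'. \<pi> z = y} = \<pi> -` {y} \<inter> set_mset p'" by auto
  then show ?thesis unfolding p2_def count_image_mset by simp
qed

lemma size_p2: "size p2 = size p'" unfolding p2_def by simp

lemma inner_closure: "2 * mx x \<le> lam \<Longrightarrow> x /\<^sub>R lam \<in> closure Dsq"
  using lam unfolding closure_Dsq by (simp add: mx_scale field_simps)

lemma size_H: "z \<in># p' \<Longrightarrow> x \<in> closure Dsq \<Longrightarrow> size (H z x) = count p' z"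
  using \<Phi>lip inner_closure unfolding H_def qlip_def by auto

lemma size_Phi2: "x \<in> closure Dsq \<Longrightarrow> size (Phi2 y x) = count p2 y"
  unfolding Phi2_def count_p2 by (subst size_sum_mset_set) (auto simp: size_H)

lemma size_phi2: "x \<in> closure Dsq \<Longrightarrow> size (phi2 x) = size p'"
proof -
  assume x: "x \<in> closure Dsq"
  have "size (phi2 x) = (\<Sum>z\<in>set_mset p'. count p' z)"
    unfolding phi2_eq by (subst size_sum_mset_set) (auto simp: size_H x)
  then show ?thesis using size_multiset_overloaded_eq[of p'] by simp
qed

lemma H_outer:
  assumes z: "z \<in># p'" and x: "x \<in> closure Dsq" and l: "lam \<le> 2 * mx x"
  shows "H z x = replicate_mset (count p' z) (gz z x)"
proof (cases "2 * mx x = lam")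
  case True
  have fr: "x /\<^sub>R lam \<in> frontier Dsq" using True lam unfolding frontier_Dsq by (simp add: mx_scale field_simps)
  have "H z x = image_mset (scaleR lam) (\<Phi> z (x /\<^sub>R lam))" using True unfolding H_def by simp
  also have "\<dots> = replicate_mset (count p' z) (lam *\<^sub>R (fst z + snd z *v (x /\<^sub>R lam)))"
    using \<Phi>bd z fr by simp
  also have "lam *\<^sub>R (fst z + snd z *v (x /\<^sub>R lam)) = gz z x"
  proof -
    have sf0: "sf x = 0" using True unfolding sf_def by simp
    show ?thesis unfolding gz_def sf0 using lam by (simp add: matrix_vector_mult_scaleR scaleR_add_right)
  qed
  finally show ?thesis .
next
  case False
  then show ?thesis using l unfolding H_def by auto
qed

lemma gz_frontier: "x \<in> frontier Dsq \<Longrightarrow> gz z x = fst (\<pi> z) + snd (\<pi> z) *v x"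
  using lam unfolding gz_def sf_def frontier_Dsq by (simp add: algebra_simps)

lemma norm_closure: "x \<in> closure Dsq \<Longrightarrow> norm x \<le> 1"
  using norm_mx[of x] unfolding closure_Dsq by simp

lemma gz_lip:
  assumes z: "z \<in># p'" and x: "x \<in> closure Dsq" and x': "x' \<in> closure Dsq"
    and l: "lam \<le> 2 * mx x" "lam \<le> 2 * mx x'"
  shows "norm (gz z x - gz z x') \<le> MM * norm (x - x')"
proof -
  obtain a X where aX: "z = (a, X)" by (cases z)
  obtain b Y where bY: "\<pi> z = (b, Y)" by (cases "\<pi> z")
  have nz: "norm z \<le> R" and dz: "norm (z - \<pi> z) \<le> \<delta>" using R \<delta> z by auto
  have na: "norm a \<le> R" and nX: "norm X \<le> R" using nz aX
    by (auto intro: order_trans[OF norm_fst_le] order_trans[OF norm_snd_le])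
  have d2: "norm (a - b, X - Y) \<le> \<delta>" using dz aX bY by simp
  have nba: "norm (b - a) \<le> \<delta>" and nYX: "norm (Y - X) \<le> \<delta>"
    using d2 by (auto simp: norm_minus_commute intro: order_trans[OF norm_fst_le] order_trans[OF norm_snd_le])
  have d0: "0 \<le> \<delta>" using nba norm_ge_zero[of "b - a"] by linarith
  define u where "u = norm (x - x')"
  define c where "c v = (b - lam *\<^sub>R a) + (Y - X) *v v" for v
  have l1: "1 - lam > 0" using lam by simp
  have s01: "0 \<le> sf x'" "sf x' \<le> 1" using l x' lam unfolding sf_def closure_Dsq by (auto simp: field_simps)
  have sdiff: "\<bar>sf x - sf x'\<bar> \<le> 2 * u / (1 - lam)"
  proof -
    have "sf x - sf x' = 2 * (mx x - mx x') / (1 - lam)" unfolding sf_def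
      by (simp add: diff_divide_distrib[symmetric] right_diff_distrib)
    moreover have "\<bar>2 * (mx x - mx x')\<bar> = 2 * \<bar>mx x - mx x'\<bar>" by (simp only: abs_mult)
    ultimately have "\<bar>sf x - sf x'\<bar> = 2 * \<bar>mx x - mx x'\<bar> / (1 - lam)" using l1 by (simp only: abs_divide)
    also have "\<dots> \<le> 2 * u / (1 - lam)" using mx_lip[of x x'] l1 unfolding u_def by (simp add: divide_right_mono)
    finally show ?thesis .
  qed
  have nc: "norm (c x) \<le> 2 * \<delta> + (1 - lam) * R"
  proof -
    have "b - lam *\<^sub>R a = (b - a) + (1 - lam) *\<^sub>R a" by (simp add: algebra_simps)
    then have "norm (b - lam *\<^sub>R a) \<le> norm (b - a) + (1 - lam) * norm a"
      using l1 by (metis abs_of_pos norm_scaleR norm_triangle_ineq)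
    also have "\<dots> \<le> \<delta> + (1 - lam) * R" using nba na l1 by (intro add_mono mult_left_mono) auto
    finally have 1: "norm (b - lam *\<^sub>R a) \<le> \<delta> + (1 - lam) * R" .
    have "norm ((Y - X) *v x) \<le> norm (Y - X) * norm x" by (rule norm_mat_vec)
    also have "\<dots> \<le> \<delta> * 1" using nYX norm_closure[OF x] d0 by (intro mult_mono) auto
    finally have 2: "norm ((Y - X) *v x) \<le> \<delta>" by simp
    show ?thesis unfolding c_def using 1 2 norm_triangle_ineq[of "b - lam *\<^sub>R a" "(Y - X) *v x"] by linarith
  qed
  have eq: "gz z x - gz z x' = X *v (x - x') + (sf x - sf x') *\<^sub>R c x + sf x' *\<^sub>R ((Y - X) *v (x - x'))"
  proof -
    have fz: "fst z = a" "snd z = X" "fst (\<pi> z) = b" "snd (\<pi> z) = Y" using aX bY by auto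
    show ?thesis unfolding gz_def c_def fz
      by (simp add: algebra_simps matrix_vector_right_distrib matrix_vector_mult_diff_distrib)
  qed
  have t1: "norm (X *v (x - x')) \<le> R * u"
    using norm_mat_vec[of X "x - x'"] nX unfolding u_def by (meson mult_right_mono norm_ge_zero order_trans)
  have t2: "norm ((sf x - sf x') *\<^sub>R c x) \<le> (2 * u / (1 - lam)) * (2 * \<delta> + (1 - lam) * R)"
  proof -
    have "\<bar>sf x - sf x'\<bar> * norm (c x) \<le> (2 * u / (1 - lam)) * (2 * \<delta> + (1 - lam) * R)"
      using sdiff nc by (intro mult_mono) auto
    then show ?thesis by simp
  qed
  have t3: "norm (sf x' *\<^sub>R ((Y - X) *v (x - x'))) \<le> \<delta> * u"
  proof -
    have "norm ((Y - X) *v (x - x')) \<le> \<delta> * u"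
      using norm_mat_vec[of "Y - X" "x - x'"] nYX unfolding u_def by (meson mult_right_mono norm_ge_zero order_trans)
    moreover have "\<bar>sf x'\<bar> \<le> 1" using s01 by simp
    ultimately have "\<bar>sf x'\<bar> * norm ((Y - X) *v (x - x')) \<le> 1 * (\<delta> * u)"
      by (intro mult_mono) auto
    then show ?thesis by simp
  qed
  have "norm (gz z x - gz z x') \<le> R * u + (2 * u / (1 - lam)) * (2 * \<delta> + (1 - lam) * R) + \<delta> * u"
    unfolding eq using t1 t2 t3 norm_triangle_ineq[of "X *v (x - x') + (sf x - sf x') *\<^sub>R c x" "sf x' *\<^sub>R ((Y - X) *v (x - x'))"] norm_triangle_ineq[of "X *v (x - x')" "(sf x - sf x') *\<^sub>R c x"]
    by linarith
  also have "\<dots> = MM * u" unfolding MM_def using l1 by (simp add: field_simps)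
  finally show ?thesis unfolding u_def .
qed

lemma MM_nonneg: "0 \<le> \<delta> \<Longrightarrow> 0 \<le> R \<Longrightarrow> 0 \<le> MM"
  unfolding MM_def using lam by simp

lemma H_outer_lip:
  assumes z: "z \<in># p'" and x: "x \<in> closure Dsq" and x': "x' \<in> closure Dsq"
    and l: "lam \<le> 2 * mx x" "lam \<le> 2 * mx x'"
  shows "Gdist (H z x) (H z x') \<le> real (count p' z) * MM * dist x x'"
proof -
  have "Gdist (H z x) (H z x') = Gdist (replicate_mset (count p' z) (gz z x)) (replicate_mset (count p' z) (gz z x'))"
    using H_outer[OF z x l(1)] H_outer[OF z x' l(2)] by simp
  also have "\<dots> \<le> real (count p' z) * norm (gz z x - gz z x')" by (rule Gdist_replicate)
  also have "\<dots> \<le> real (count p' z) * (MM * norm (x - x'))"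
    using gz_lip[OF z x x' l] by (intro mult_left_mono) auto
  finally show ?thesis by (simp add: dist_norm mult.assoc)
qed

lemma H_inner_lip:
  assumes z: "z \<in># p'"
  shows "\<exists>L\<ge>0. \<forall>x\<in>closure Dsq. \<forall>x'\<in>closure Dsq. 2 * mx x \<le> lam \<and> 2 * mx x' \<le> lam \<longrightarrow> Gdist (H z x) (H z x') \<le> L * dist x x'"
proof -
  obtain L where L: "L \<ge> 0" "\<forall>x\<in>closure Dsq. \<forall>y\<in>closure Dsq. Gdist (\<Phi> z x) (\<Phi> z y) \<le> L * dist x y"
    using qlip_D \<Phi>lip z by blast
  have szz: "\<forall>x\<in>closure Dsq. size (\<Phi> z x) = count p' z" using \<Phi>lip z unfolding qlip_def by auto
  show ?thesis
  proof (intro exI[of _ L] conjI ballI impI)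
    fix x x' assume x: "x \<in> closure Dsq" and x': "x' \<in> closure Dsq" and l: "2 * mx x \<le> lam \<and> 2 * mx x' \<le> lam"
    have c1: "x /\<^sub>R lam \<in> closure Dsq" "x' /\<^sub>R lam \<in> closure Dsq" using inner_closure l by auto
    have "Gdist (H z x) (H z x') = Gdist (image_mset (scaleR lam) (\<Phi> z (x /\<^sub>R lam))) (image_mset (scaleR lam) (\<Phi> z (x' /\<^sub>R lam)))"
      using l unfolding H_def by simp
    also have "\<dots> \<le> lam * Gdist (\<Phi> z (x /\<^sub>R lam)) (\<Phi> z (x' /\<^sub>R lam))"
      by (rule Gdist_map) (use szz c1 lam in \<open>auto simp: scaleR_diff_right[symmetric]\<close>)
    also have "\<dots> \<le> lam * (L * dist (x /\<^sub>R lam) (x' /\<^sub>R lam))"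
      using L c1 lam by (intro mult_left_mono) auto
    also have "dist (x /\<^sub>R lam) (x' /\<^sub>R lam) = dist x x' / lam"
    proof -
      have "x /\<^sub>R lam - x' /\<^sub>R lam = (1/lam) *\<^sub>R (x - x')" by (simp add: algebra_simps inverse_eq_divide)
      then show ?thesis using lam by (simp add: dist_norm)
    qed
    also have "lam * (L * (dist x x' / lam)) = L * dist x x'" using lam by simp
    finally show "Gdist (H z x) (H z x') \<le> L * dist x x'" .
  qed (use L in auto)
qed

lemma convex_closure_Dsq: "convex (closure Dsq)"
  unfolding Dsq_def by (intro convex_closure convex_box)

lemma H_lip:
  assumes z: "z \<in># p'" and d0: "0 \<le> \<delta>" and R0: "0 \<le> R"
  shows "\<exists>L. \<forall>x\<in>closure Dsq. \<forall>x'\<in>closure Dsq. Gdist (H z x) (H z x') \<le> L * dist x x'"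
proof -
  obtain L where L: "L \<ge> 0" "\<forall>x\<in>closure Dsq. \<forall>x'\<in>closure Dsq. 2 * mx x \<le> lam \<and> 2 * mx x' \<le> lam \<longrightarrow> Gdist (H z x) (H z x') \<le> L * dist x x'"
    using H_inner_lip[OF z] by blast
  define K where "K = max L (real (count p' z) * MM)"
  have M0: "0 \<le> real (count p' z) * MM" using MM_nonneg[OF d0 R0] by simp
  have cont: "continuous_on (closure Dsq) (\<lambda>x. 2 * mx x)" using mx_cont by (intro continuous_intros) auto
  have "\<forall>x\<in>closure Dsq. \<forall>y\<in>closure Dsq. Gdist (H z x) (H z y) \<le> K * dist x y"
  proof (rule glue_lip[OF convex_closure_Dsq cont, where n = "count p' z" and c = lam])
    show "\<forall>x\<in>closure Dsq. size (H z x) = count p' z" using size_H z by auto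
    show "\<forall>x\<in>closure Dsq. \<forall>y\<in>closure Dsq. 2 * mx x \<le> lam \<and> 2 * mx y \<le> lam \<longrightarrow> Gdist (H z x) (H z y) \<le> K * dist x y"
    proof (intro ballI impI)
      fix x y assume xy: "x \<in> closure Dsq" "y \<in> closure Dsq" "2 * mx x \<le> lam \<and> 2 * mx y \<le> lam"
      have "Gdist (H z x) (H z y) \<le> L * dist x y" using L xy by auto
      also have "\<dots> \<le> K * dist x y" unfolding K_def by (intro mult_right_mono) auto
      finally show "Gdist (H z x) (H z y) \<le> K * dist x y" .
    qed
    show "\<forall>x\<in>closure Dsq. \<forall>y\<in>closure Dsq. lam \<le> 2 * mx x \<and> lam \<le> 2 * mx y \<longrightarrow> Gdist (H z x) (H z y) \<le> K * dist x y"
    proof (intro ballI impI)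
      fix x y assume xy: "x \<in> closure Dsq" "y \<in> closure Dsq" "lam \<le> 2 * mx x \<and> lam \<le> 2 * mx y"
      have "Gdist (H z x) (H z y) \<le> real (count p' z) * MM * dist x y" using H_outer_lip[OF z] xy by auto
      also have "\<dots> \<le> K * dist x y" unfolding K_def by (intro mult_right_mono) auto
      finally show "Gdist (H z x) (H z y) \<le> K * dist x y" .
    qed
  qed
  then show ?thesis by blast
qed

lemma Phi2_lip:
  assumes d0: "0 \<le> \<delta>" and R0: "0 \<le> R"
  shows "\<exists>L. \<forall>x\<in>closure Dsq. \<forall>x'\<in>closure Dsq. Gdist (Phi2 y x) (Phi2 y x') \<le> L * dist x x'"
proof -
  obtain Lf where Lf: "\<forall>z\<in>#p'. \<forall>x\<in>closure Dsq. \<forall>x'\<in>closure Dsq. Gdist (H z x) (H z x') \<le> Lf z * dist x x'"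
    using H_lip[OF _ d0 R0] by metis
  let ?F = "{z\<in>set_mset p'. \<pi> z = y}"
  have "Gdist (Phi2 y x) (Phi2 y x') \<le> (\<Sum>z\<in>?F. Lf z) * dist x x'" if x: "x \<in> closure Dsq" "x' \<in> closure Dsq" for x x'
  proof -
    have "Gdist (Phi2 y x) (Phi2 y x') \<le> (\<Sum>z\<in>?F. Gdist (H z x) (H z x'))"
      unfolding Phi2_def by (rule Gdist_sum) (auto simp: size_H x)
    also have "\<dots> \<le> (\<Sum>z\<in>?F. Lf z * dist x x')" using Lf x by (intro sum_mono) auto
    also have "\<dots> = (\<Sum>z\<in>?F. Lf z) * dist x x'" by (simp add: sum_distrib_right)
    finally show ?thesis .
  qed
  then show ?thesis by blast
qed

lemma phi2_lip:
  assumes d0: "0 \<le> \<delta>" and R0: "0 \<le> R"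
  shows "\<exists>L. \<forall>x\<in>closure Dsq. \<forall>x'\<in>closure Dsq. Gdist (phi2 x) (phi2 x') \<le> L * dist x x'"
proof -
  obtain Lf where Lf: "\<forall>z\<in>#p'. \<forall>x\<in>closure Dsq. \<forall>x'\<in>closure Dsq. Gdist (H z x) (H z x') \<le> Lf z * dist x x'"
    using H_lip[OF _ d0 R0] by metis
  have "Gdist (phi2 x) (phi2 x') \<le> (\<Sum>z\<in>set_mset p'. Lf z) * dist x x'" if x: "x \<in> closure Dsq" "x' \<in> closure Dsq" for x x'
  proof -
    have "Gdist (phi2 x) (phi2 x') \<le> (\<Sum>z\<in>set_mset p'. Gdist (H z x) (H z x'))"
      unfolding phi2_eq by (rule Gdist_sum) (auto simp: size_H x)
    also have "\<dots> \<le> (\<Sum>z\<in>set_mset p'. Lf z * dist x x')" using Lf x by (intro sum_mono) auto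
    also have "\<dots> = (\<Sum>z\<in>set_mset p'. Lf z) * dist x x'" by (simp add: sum_distrib_right)
    finally show ?thesis .
  qed
  then show ?thesis by blast
qed

lemma Phi2_bd:
  assumes y: "y \<in># p2" and x: "x \<in> frontier Dsq"
  shows "Phi2 y x = replicate_mset (count p2 y) (fst y + snd y *v x)"
proof -
  have xc: "x \<in> closure Dsq" and m: "lam \<le> 2 * mx x" using x lam unfolding frontier_Dsq closure_Dsq by auto
  have "Phi2 y x = (\<Sum>z\<in>{z\<in>set_mset p'. \<pi> z = y}. replicate_mset (count p' z) (fst y + snd y *v x))"
    unfolding Phi2_def
  proof (rule sum.cong[OF refl])
    fix z assume z: "z \<in> {z\<in>set_mset p'. \<pi> z = y}"
    show "H z x = replicate_mset (count p' z) (fst y + snd y *v x)"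
      using H_outer[OF _ xc m] gz_frontier[OF x] z by auto
  qed
  also have "\<dots> = replicate_mset (count p2 y) (fst y + snd y *v x)"
    unfolding count_p2 by (rule sum_replicate_mset) simp
  finally show ?thesis .
qed

lemma phi2_Tset:
  assumes d0: "0 \<le> \<delta>" and R0: "0 \<le> R"
  shows "phi2 \<in> Tset p2 Dsq"
proof -
  have 1: "qlip (size p2) (closure Dsq) phi2"
    unfolding qlip_def using size_phi2 size_p2 phi2_lip[OF d0 R0] by auto
  have 2: "\<forall>y\<in>set_mset p2. qlip (count p2 y) (closure Dsq) (Phi2 y) \<and>
      (\<forall>x\<in>frontier Dsq. Phi2 y x = replicate_mset (count p2 y) (fst y + snd y *v x))"
    unfolding qlip_def using size_Phi2 Phi2_lip[OF d0 R0] Phi2_bd by auto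
  have 3: "\<forall>x\<in>closure Dsq. phi2 x = (\<Sum>y\<in>set_mset p2. Phi2 y x)" unfolding phi2_def by simp
  show ?thesis unfolding Tset_def using 1 2 3 by blast
qed

lemma phi2_inner:
  assumes "2 * mx x \<le> lam"
  shows "phi2 x = image_mset (scaleR lam) (\<phi> (x /\<^sub>R lam))"
proof -
  have "phi2 x = (\<Sum>z\<in>set_mset p'. image_mset (scaleR lam) (\<Phi> z (x /\<^sub>R lam)))"
    unfolding phi2_eq H_def using assms by simp
  also have "\<dots> = image_mset (scaleR lam) (\<Sum>z\<in>set_mset p'. \<Phi> z (x /\<^sub>R lam))"
    by (simp add: image_mset_sum_set)
  also have "\<dots> = image_mset (scaleR lam) (\<phi> (x /\<^sub>R lam))"
    using \<phi>sum inner_closure[OF assms] by simp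
  finally show ?thesis .
qed

lemma phi2_outer_lip:
  assumes x: "x \<in> closure Dsq" and x': "x' \<in> closure Dsq" and l: "lam \<le> 2 * mx x" "lam \<le> 2 * mx x'"
  shows "Gdist (phi2 x) (phi2 x') \<le> real (size p') * MM * dist x x'"
proof -
  have "Gdist (phi2 x) (phi2 x') \<le> (\<Sum>z\<in>set_mset p'. Gdist (H z x) (H z x'))"
    unfolding phi2_eq by (rule Gdist_sum) (auto simp: size_H x x')
  also have "\<dots> \<le> (\<Sum>z\<in>set_mset p'. real (count p' z) * MM * dist x x')"
    using H_outer_lip x x' l by (intro sum_mono) auto
  also have "\<dots> = real (\<Sum>z\<in>set_mset p'. count p' z) * MM * dist x x'"
    by (simp add: sum_distrib_right)
  also have "(\<Sum>z\<in>set_mset p'. count p' z) = size p'" using size_multiset_overloaded_eq[of p'] by simp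
  finally show ?thesis .
qed

lemma size_phi: "y \<in> closure Dsq \<Longrightarrow> size (\<phi> y) = size p'"
proof -
  assume y: "y \<in> closure Dsq"
  have "size (\<phi> y) = size (\<Sum>z\<in>set_mset p'. \<Phi> z y)" using \<phi>sum y by simp
  also have "\<dots> = (\<Sum>z\<in>set_mset p'. size (\<Phi> z y))" by (rule size_sum_mset_set) simp
  also have "\<dots> = (\<Sum>z\<in>set_mset p'. count p' z)"
    using \<Phi>lip y unfolding qlip_def by (intro sum.cong) auto
  finally have "size (\<phi> y) = (\<Sum>z\<in>set_mset p'. count p' z)" .
  then show ?thesis using size_multiset_overloaded_eq[of p'] by simp
qed

lemma integral_bound:
  assumes d0: "0 \<le> \<delta>" and R0: "0 \<le> R"
  shows "(\<integral>\<^sup>+x\<in>Dsq. ennreal (psibar eps d (qgrad phi2 x)) \<partial>lborel) \<le>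
    (\<integral>\<^sup>+x\<in>Dsq. ennreal (psibar eps d (qgrad \<phi> x)) \<partial>lborel) +
    ennreal (real (size p') * (1 + 2 * (real (size p') * MM)^2) * (1 - lam^2))"
proof -
  define B where "B = real (size p') * (1 + 2 * (real (size p') * MM)^2)"
  define G where "G y = ennreal (psibar eps d (qgrad \<phi> y)) * indicator Dsq y" for y
  define Cb where "Cb = (cbox (\<chi> i. - (lam/2)) (\<chi> i. lam/2) :: pt2 set)"
  define Bb where "Bb = (box (\<chi> i. - (lam/2)) (\<chi> i. lam/2) :: pt2 set)"
  define Ann where "Ann = Dsq - Cb"
  define N where "N = Cb - Bb"
  have B0: "0 \<le> B" unfolding B_def by simp
  have K0: "0 \<le> real (size p') * MM" using MM_nonneg[OF d0 R0] by simp
  have l2: "0 \<le> lam / 2" using lam by simp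
  have mCb: "emeasure lborel Cb = ennreal (lam^2)" unfolding Cb_def using emeasure_cbox_sym[OF l2] by simp
  have mBb: "emeasure lborel Bb = ennreal (lam^2)" unfolding Bb_def using emeasure_box_sym[OF l2] by simp
  have mD: "emeasure lborel Dsq = ennreal 1" unfolding Dsq_box using emeasure_box_sym[of "1/2"] by simp
  have sCb: "Cb \<in> sets lborel" and sBb: "Bb \<in> sets lborel" and sD: "Dsq \<in> sets lborel"
    unfolding Cb_def Bb_def Dsq_def by auto
  have CbD: "Cb \<subseteq> Dsq" unfolding Cb_def Dsq_mx using cbox_mx lam by auto
  have Nnull: "N \<in> null_sets lborel"
  proof -
    have "emeasure lborel N = emeasure lborel Cb - emeasure lborel Bb"
      unfolding N_def by (rule emeasure_Diff) (use mBb sCb sBb in \<open>auto simp: Bb_def Cb_def box_subset_cbox\<close>)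
    also have "\<dots> = 0" using mCb mBb by simp
    finally show ?thesis unfolding N_def using sCb sBb by (auto simp: null_sets_def)
  qed
  have H: "ennreal (psibar eps d (qgrad phi2 x)) * indicator Dsq x \<le> G (x /\<^sub>R lam) + ennreal B * indicator Ann x"
    if xN: "x \<notin> N" for x
  proof (cases "x \<in> Dsq")
    case False then show ?thesis by simp
  next
    case xD: True
    have m: "mx x < 1/2" using xD Dsq_mx by auto
    have "mx x \<noteq> lam / 2" using xN cbox_mx[of x "lam/2"] box_mx[of x "lam/2"] unfolding N_def Cb_def Bb_def by auto
    then consider (inn) "mx x < lam / 2" | (out) "lam / 2 < mx x" by linarith
    then show ?thesis
    proof cases
      case inn
      have Uo: "open Bb" unfolding Bb_def by (rule open_box)
      have xU: "x \<in> Bb" unfolding Bb_def box_mx using inn .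
      have BbC: "\<And>y. y \<in> Bb \<Longrightarrow> y \<in> closure Dsq \<and> 2 * mx y \<le> lam"
        unfolding Bb_def box_mx closure_Dsq using lam by auto
      have xl: "x /\<^sub>R lam \<in> Dsq" unfolding Dsq_mx using inn lam by (simp add: mx_scale field_simps)
      have "psibar eps d (qgrad phi2 x) \<le> psibar eps d (qgrad \<phi> (x /\<^sub>R lam))"
      proof (rule qgrad_scale_le[OF lam(1) Uo xU _ _ open_Dsq xl])
        show "\<forall>y\<in>Bb. phi2 y = image_mset (scaleR lam) (\<phi> (y /\<^sub>R lam))" using BbC phi2_inner by auto
        show "\<forall>y\<in>Bb. size (phi2 y) = size p'" using BbC size_phi2 by auto
        show "\<forall>y\<in>Dsq. size (\<phi> y) = size p'" using size_phi closure_subset by blast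
      qed
      then have "ennreal (psibar eps d (qgrad phi2 x)) \<le> G (x /\<^sub>R lam)"
        unfolding G_def using xl by (simp add: ennreal_leI)
      then show ?thesis using xD by (simp add: add_increasing2)
    next
      case out
      define U where "U = Dsq \<inter> - Cb"
      have Uo: "open U" unfolding U_def Cb_def using open_Dsq by (intro open_Int open_Compl) auto
      have xU: "x \<in> U" unfolding U_def Cb_def using xD out cbox_mx by auto
      have UC: "y \<in> closure Dsq \<and> lam \<le> 2 * mx y" if "y \<in> U" for y
      proof -
        have "y \<in> Dsq" "y \<notin> Cb" using that unfolding U_def by auto
        then show ?thesis using closure_subset[of Dsq] cbox_mx[of y "lam/2"] unfolding Cb_def by auto
      qed
      have "psibar eps d (qgrad phi2 x) \<le> real (size p') * (1 + 2 * (real (size p') * MM)^2)"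
      proof (rule psibar_qgrad_bound[OF Uo xU _ _ K0])
        show "\<forall>y\<in>U. size (phi2 y) = size p'" using UC size_phi2 by auto
        show "\<forall>y\<in>U. \<forall>y'\<in>U. Gdist (phi2 y) (phi2 y') \<le> real (size p') * MM * dist y y'"
          using UC phi2_outer_lip by auto
      qed
      then have "ennreal (psibar eps d (qgrad phi2 x)) \<le> ennreal B" unfolding B_def by (simp add: ennreal_leI)
      moreover have "x \<in> Ann" unfolding Ann_def Cb_def using xD out cbox_mx by auto
      ultimately show ?thesis using xD by (simp add: add_increasing)
    qed
  qed
  have pw: "AE x in lborel. ennreal (psibar eps d (qgrad phi2 x)) * indicator Dsq x \<le> G (x /\<^sub>R lam) + ennreal B * indicator Ann x"
    using eventually_mono[OF AE_not_in[OF Nnull] H] .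
  have sAnn: "Ann \<in> sets lborel" unfolding Ann_def using sD sCb by auto
  have mAnn: "emeasure lborel Ann = ennreal (1 - lam^2)"
  proof -
    have "emeasure lborel Ann = emeasure lborel Dsq - emeasure lborel Cb"
      unfolding Ann_def by (rule emeasure_Diff) (use mCb sD sCb CbD in auto)
    also have "\<dots> = ennreal (1 - lam^2)" using mD mCb ennreal_minus[of "lam^2" 1] by simp
    finally show ?thesis .
  qed
  have "(\<integral>\<^sup>+x\<in>Dsq. ennreal (psibar eps d (qgrad phi2 x)) \<partial>lborel) \<le> (\<integral>\<^sup>+x. G (x /\<^sub>R lam) + ennreal B * indicator Ann x \<partial>lborel)"
    by (rule nn_integral_mono_AE[OF pw])
  also have "\<dots> \<le> (\<integral>\<^sup>+x. G (x /\<^sub>R lam) \<partial>lborel) + (\<integral>\<^sup>+x. ennreal B * indicator Ann x \<partial>lborel)"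
    by (rule nn_integral_add_le_meas) (use sAnn in simp)
  also have "(\<integral>\<^sup>+x. G (x /\<^sub>R lam) \<partial>lborel) \<le> ennreal (lam^2) * (\<integral>\<^sup>+y. G y \<partial>lborel)"
    by (rule nn_integral_scale_le[OF lam(1)])
  also have "\<dots> \<le> 1 * (\<integral>\<^sup>+y. G y \<partial>lborel)"
    using lam by (intro mult_right_mono) (auto simp: power_le_one)
  also have "(\<integral>\<^sup>+x. ennreal B * indicator Ann x \<partial>lborel) = ennreal B * ennreal (1 - lam^2)"
    using nn_integral_cmult_indicator[OF sAnn, of "ennreal B"] mAnn by simp
  also have "ennreal B * ennreal (1 - lam^2) = ennreal (B * (1 - lam^2))"
    by (rule ennreal_mult'[symmetric, OF B0])
  finally show ?thesis unfolding G_def B_def by simp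
qed

end

lemma INF_add_const_ennreal: "(INF i\<in>I. f i) + (c::ennreal) = (INF i\<in>I. f i + c)"
proof (cases "I = {}")
  case True then show ?thesis by simp
next
  case False
  show ?thesis
    using continuous_at_Inf_mono[of "\<lambda>x. x + c" "f ` I"]
      continuous_add[of "at_right (Inf (f ` I))" "\<lambda>x. x" "\<lambda>x. c"] False
    by (auto simp: mono_def image_comp)
qed

lemma emeasure_Dsq: "emeasure lborel Dsq = 1"
  unfolding Dsq_box using emeasure_box_sym[of "1/2"] by simp

lemma Aq_alt: "Aq eps d p = (INF \<phi>\<in>Tset p Dsq. (\<integral>\<^sup>+x\<in>Dsq. ennreal (psibar eps d (qgrad \<phi> x)) \<partial>lborel))"
  unfolding Aq_def emeasure_Dsq by (simp add: divide_ennreal_def)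

lemma Aq_transfer:
  fixes p' :: "qpt multiset" and \<pi> :: "qpt \<Rightarrow> qpt" and lam \<delta> R :: real
  assumes \<delta>: "\<forall>z\<in>#p'. norm (z - \<pi> z) \<le> \<delta>" and R: "\<forall>z\<in>#p'. norm z \<le> R"
    and lam: "0 < lam" "lam < 1" and d0: "0 \<le> \<delta>" and R0: "0 \<le> R"
  shows "Aq eps d (image_mset \<pi> p') \<le> Aq eps d p' +
    ennreal (real (size p') * (1 + 2 * (real (size p') * (3*R + \<delta> + 4*\<delta>/(1-lam)))^2) * (1 - lam^2))"
proof -
  let ?c = "ennreal (real (size p') * (1 + 2 * (real (size p') * (3*R + \<delta> + 4*\<delta>/(1-lam)))^2) * (1 - lam^2))"
  let ?F = "\<lambda>\<phi>. (\<integral>\<^sup>+x\<in>Dsq. ennreal (psibar eps d (qgrad \<phi> x)) \<partial>lborel)"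
  have each: "Aq eps d (image_mset \<pi> p') \<le> ?F \<phi> + ?c" if \<phi>: "\<phi> \<in> Tset p' Dsq" for \<phi>
  proof -
    obtain \<Phi> where \<Phi>: "\<forall>y\<in>set_mset p'. qlip (count p' y) (closure Dsq) (\<Phi> y) \<and>
              (\<forall>x\<in>frontier Dsq. \<Phi> y x = replicate_mset (count p' y) (fst y + snd y *v x))"
        "\<forall>x\<in>closure Dsq. \<phi> x = (\<Sum>y\<in>set_mset p'. \<Phi> y x)"
      using \<phi> unfolding Tset_def by blast
    interpret tr p' \<pi> lam \<delta> R \<phi> \<Phi>
      by unfold_locales (use \<Phi> \<delta> R lam in auto)
    have "Aq eps d p2 \<le> ?F phi2" unfolding Aq_alt by (rule INF_lower) (rule phi2_Tset[OF d0 R0])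
    also have "\<dots> \<le> ?F \<phi> + ?c" using integral_bound[OF d0 R0] unfolding MM_def .
    finally show ?thesis unfolding p2_def .
  qed
  have "Aq eps d (image_mset \<pi> p') \<le> (INF \<phi>\<in>Tset p' Dsq. ?F \<phi> + ?c)"
    by (rule INF_greatest) (rule each)
  also have "\<dots> = Aq eps d p' + ?c" unfolding Aq_alt by (rule INF_add_const_ennreal[symmetric])
  finally show ?thesis .
qed


lemma Xnorm_ge: "y \<in># p \<Longrightarrow> norm (snd y) \<le> Xnorm p"
proof -
  assume y: "y \<in># p"
  show ?thesis unfolding Xnorm_def
  proof (rule Gdist_ge)
    show "size (image_mset snd p) = size (replicate_mset (size p) (0::mat2))" by simp
    fix xs ys assume xs: "mset xs = image_mset snd p" and ys: "mset ys = replicate_mset (size p) (0::mat2)"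
    have "snd y \<in> set xs" using y xs by (metis image_eqI set_image_mset set_mset_mset)
    then obtain i where i: "i < length xs" "xs!i = snd y" by (metis in_set_conv_nth)
    have "length ys = length xs" using xs ys by (metis size_mset size_image_mset size_replicate_mset)
    then have "ys!i \<in># replicate_mset (size p) 0" using ys i by (metis nth_mem set_mset_mset)
    then have "ys!i = 0" by (simp split: if_splits)
    then show "norm (snd y) \<le> gsum xs ys" using gsum_ge_term[OF i(1), of ys] i by simp
  qed
qed

lemma Xnorm_nonneg: "0 \<le> Xnorm p"
  unfolding Xnorm_def by (rule Gdist_nonneg) simp

lemma affine_bound:
  "Aq eps d p \<le> ennreal (real (size p) * (1 + 2 * (real (size p) * Xnorm p)^2))"
proof -
  define \<Phi> where "\<Phi> y x = replicate_mset (count p y) (fst y + snd y *v x)" for y x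
  define \<phi> where "\<phi> x = (\<Sum>y\<in>set_mset p. \<Phi> y x)" for x
  define K where "K = real (size p) * Xnorm p"
  have K0: "0 \<le> K" unfolding K_def using Xnorm_nonneg by simp
  have Philip: "Gdist (\<Phi> y x) (\<Phi> y x') \<le> real (count p y) * Xnorm p * dist x x'" if y: "y \<in># p" for y x x'
  proof -
    have "Gdist (\<Phi> y x) (\<Phi> y x') \<le> real (count p y) * norm ((fst y + snd y *v x) - (fst y + snd y *v x'))"
      unfolding \<Phi>_def by (rule Gdist_replicate)
    also have "norm ((fst y + snd y *v x) - (fst y + snd y *v x')) = norm (snd y *v (x - x'))"
      by (simp add: matrix_vector_mult_diff_distrib)
    also have "\<dots> \<le> norm (snd y) * norm (x - x')" by (rule norm_mat_vec)
    also have "\<dots> \<le> Xnorm p * norm (x - x')" by (rule mult_right_mono[OF Xnorm_ge[OF y]]) simp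
    also have "\<dots> = Xnorm p * dist x x'" by (simp add: dist_norm)
    finally show ?thesis by (simp add: mult.assoc mult_left_mono)
  qed
  have sizephi: "size (\<phi> x) = size p" for x
  proof -
    have "size (\<phi> x) = (\<Sum>y\<in>set_mset p. count p y)"
      unfolding \<phi>_def \<Phi>_def by (subst size_sum_mset_set) auto
    then show ?thesis using size_multiset_overloaded_eq[of p] by simp
  qed
  have philip: "Gdist (\<phi> x) (\<phi> x') \<le> K * dist x x'" for x x'
  proof -
    have "Gdist (\<phi> x) (\<phi> x') \<le> (\<Sum>y\<in>set_mset p. Gdist (\<Phi> y x) (\<Phi> y x'))"
      unfolding \<phi>_def by (rule Gdist_sum) (auto simp: \<Phi>_def)
    also have "\<dots> \<le> (\<Sum>y\<in>set_mset p. real (count p y) * Xnorm p * dist x x')"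
      using Philip by (intro sum_mono) auto
    also have "\<dots> = real (\<Sum>y\<in>set_mset p. count p y) * Xnorm p * dist x x'"
      by (simp add: sum_distrib_right)
    also have "(\<Sum>y\<in>set_mset p. count p y) = size p" using size_multiset_overloaded_eq[of p] by simp
    finally show ?thesis unfolding K_def .
  qed
  have T: "\<phi> \<in> Tset p Dsq"
  proof -
    have 1: "qlip (size p) (closure Dsq) \<phi>" unfolding qlip_def using sizephi philip by blast
    have 2: "\<forall>y\<in>set_mset p. qlip (count p y) (closure Dsq) (\<Phi> y) \<and>
      (\<forall>x\<in>frontier Dsq. \<Phi> y x = replicate_mset (count p y) (fst y + snd y *v x))"
    proof
      fix y assume y: "y \<in># p"
      have L: "\<forall>x\<in>closure Dsq. \<forall>x'\<in>closure Dsq. Gdist (\<Phi> y x) (\<Phi> y x') \<le> (real (count p y) * Xnorm p) * dist x x'"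
        using Philip[OF y] by simp
      have S: "\<forall>x\<in>closure Dsq. size (\<Phi> y x) = count p y" by (simp add: \<Phi>_def)
      have "qlip (count p y) (closure Dsq) (\<Phi> y)" unfolding qlip_def using L S by blast
      then show "qlip (count p y) (closure Dsq) (\<Phi> y) \<and>
        (\<forall>x\<in>frontier Dsq. \<Phi> y x = replicate_mset (count p y) (fst y + snd y *v x))"
        by (simp add: \<Phi>_def)
    qed
    have 3: "\<forall>x\<in>closure Dsq. \<phi> x = (\<Sum>y\<in>set_mset p. \<Phi> y x)" unfolding \<phi>_def by simp
    show ?thesis unfolding Tset_def using 1 2 3 by blast
  qed
  have pt: "ennreal (psibar eps d (qgrad \<phi> x)) * indicator Dsq x \<le> ennreal (real (size p) * (1 + 2 * K^2)) * indicator Dsq x" for x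
  proof (cases "x \<in> Dsq")
    case True
    have "psibar eps d (qgrad \<phi> x) \<le> real (size p) * (1 + 2 * K^2)"
      by (rule psibar_qgrad_bound[OF open_Dsq True _ _ K0]) (use sizephi philip in auto)
    then show ?thesis using True by (simp add: ennreal_leI)
  qed simp
  have "Aq eps d p \<le> (\<integral>\<^sup>+x\<in>Dsq. ennreal (psibar eps d (qgrad \<phi> x)) \<partial>lborel)"
    unfolding Aq_alt by (rule INF_lower[OF T])
  also have "\<dots> \<le> (\<integral>\<^sup>+x. ennreal (real (size p) * (1 + 2 * K^2)) * indicator Dsq x \<partial>lborel)"
    by (rule nn_integral_mono) (rule pt)
  also have "\<dots> = ennreal (real (size p) * (1 + 2 * K^2))"
    using nn_integral_cmult_indicator[of Dsq lborel] emeasure_Dsq by (simp add: Dsq_def)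
  finally show ?thesis unfolding K_def .
qed

lemma Aq_finite: "Aq eps d p < top"
  using affine_bound[of eps d p] by (simp add: top.not_eq_extremum le_less_trans)

lemma cluster:
  fixes p q :: "qpt multiset"
  assumes sz: "size q = size p" and s: "s > 0" "\<forall>y\<in>#p. \<forall>y'\<in>#p. y \<noteq> y' \<longrightarrow> s \<le> dist y y'"
    and G: "Gdist q p < s / 2"
  shows "\<exists>\<pi>. p = image_mset \<pi> q \<and> (\<forall>z\<in>#q. norm (z - \<pi> z) \<le> Gdist q p)"
proof -
  obtain xs ys where 1: "mset xs = q" "mset ys = p" "Gdist q p = gsum xs ys"
    using Gdist_attained[OF sz] by blast
  have len: "length xs = length ys" using 1 sz by (metis size_mset)
  have close: "norm (xs!i - ys!i) \<le> Gdist q p" if "i < length xs" for i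
    using gsum_ge_term[OF that] 1 by simp
  define \<pi> where "\<pi> z = (SOME y. y \<in># p \<and> norm (z - y) < s/2)" for z
  have \<pi>i: "\<pi> (xs!i) = ys!i" if i: "i < length xs" for i
  proof -
    have yi: "ys!i \<in># p" using 1 len i by (metis nth_mem set_mset_mset)
    have "norm (xs!i - ys!i) < s/2" using close[OF i] G by linarith
    then have ex: "\<exists>y. y \<in># p \<and> norm (xs!i - y) < s/2" using yi by blast
    have y': "\<pi> (xs!i) \<in># p \<and> norm (xs!i - \<pi> (xs!i)) < s/2"
      unfolding \<pi>_def by (rule someI_ex[OF ex])
    have "dist (\<pi> (xs!i)) (ys!i) \<le> norm (\<pi> (xs!i) - xs!i) + norm (xs!i - ys!i)"
      unfolding dist_norm using norm_triangle_ineq[of "\<pi> (xs!i) - xs!i" "xs!i - ys!i"] by simp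
    also have "\<dots> < s" using y' close[OF i] G by (simp add: norm_minus_commute)
    finally have "dist (\<pi> (xs!i)) (ys!i) < s" .
    then show ?thesis using s(2) y' yi by force
  qed
  have "map \<pi> xs = ys" using len \<pi>i by (intro nth_equalityI) auto
  then have "p = image_mset \<pi> q" using 1 by (metis mset_map)
  moreover have "\<forall>z\<in>#q. norm (z - \<pi> z) \<le> Gdist q p"
  proof
    fix z assume "z \<in># q"
    then obtain i where "i < length xs" "xs!i = z" using 1 by (metis in_set_conv_nth set_mset_mset)
    then show "norm (z - \<pi> z) \<le> Gdist q p" using close \<pi>i by auto
  qed
  ultimately show ?thesis by blast
qed

definition "lamk G k = 1 - sqrt G - inverse (real (Suc k))"
definition "ek Q Rp G k = real Q * (1 + 2 * (real Q * (3 * (Rp + G) + G + 4 * G / (1 - lamk G k)))^2) * (1 - (lamk G k)^2)"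

lemma lamk_lt1: "0 \<le> G \<Longrightarrow> lamk G k < 1"
proof -
  assume G: "0 \<le> G"
  have a: "0 < inverse (real (Suc k))" by simp
  have b: "0 \<le> sqrt G" using G by simp
  show ?thesis unfolding lamk_def using a b by linarith
qed

lemma ek_nonneg: "0 \<le> G \<Longrightarrow> 0 \<le> lamk G k \<Longrightarrow> 0 \<le> ek Q Rp G k"
proof -
  assume G: "0 \<le> G" and l: "0 \<le> lamk G k"
  have "lamk G k < 1" using lamk_lt1[OF G] .
  then have "(lamk G k)^2 \<le> 1" using l by (simp add: power_le_one)
  then show ?thesis unfolding ek_def by simp
qed

lemma ek_tendsto:
  assumes G: "Gs \<longlonglongrightarrow> 0" and G0: "\<forall>k. 0 \<le> Gs k"
  shows "(\<lambda>k. ek Q Rp (Gs k) k) \<longlonglongrightarrow> 0" and "(\<lambda>k. lamk (Gs k) k) \<longlonglongrightarrow> 1"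
proof -
  have sq: "(\<lambda>k. sqrt (Gs k)) \<longlonglongrightarrow> 0" using tendsto_real_sqrt[OF G] by simp
  show lam: "(\<lambda>k. lamk (Gs k) k) \<longlonglongrightarrow> 1"
    unfolding lamk_def using tendsto_diff[OF tendsto_diff[OF tendsto_const sq] LIMSEQ_inverse_real_of_nat] by simp
  have q0: "0 \<le> Gs k / (1 - lamk (Gs k) k)" for k
    using G0 lamk_lt1[of "Gs k" k] by simp
  have q1: "Gs k / (1 - lamk (Gs k) k) \<le> sqrt (Gs k)" for k
  proof (cases "Gs k = 0")
    case True then show ?thesis by simp
  next
    case False
    then have pos: "0 < sqrt (Gs k)" using G0 by (simp add: order_le_neq_trans)
    have "sqrt (Gs k) \<le> 1 - lamk (Gs k) k" unfolding lamk_def by simp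
    then have "Gs k / (1 - lamk (Gs k) k) \<le> Gs k / sqrt (Gs k)"
      using pos G0 lamk_lt1[of "Gs k" k] by (intro divide_left_mono) (auto intro: mult_pos_pos)
    also have "\<dots> = sqrt (Gs k)" using G0 by (simp add: real_div_sqrt)
    finally show ?thesis .
  qed
  have q: "(\<lambda>k. Gs k / (1 - lamk (Gs k) k)) \<longlonglongrightarrow> 0"
    by (rule tendsto_sandwich[OF _ _ tendsto_const sq]) (use q0 q1 in auto)
  have "(\<lambda>k. ek Q Rp (Gs k) k) \<longlonglongrightarrow>
      real Q * (1 + 2 * (real Q * (3 * (Rp + 0) + 0 + 4 * 0))^2) * (1 - 1^2)"
  proof -
    have q4: "(\<lambda>k. 4 * Gs k / (1 - lamk (Gs k) k)) \<longlonglongrightarrow> 4 * 0"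
      using tendsto_mult[OF tendsto_const q, of 4] by (simp add: times_divide_eq_right)
    show ?thesis unfolding ek_def by (intro tendsto_intros G q4 lam)
  qed
  then show "(\<lambda>k. ek Q Rp (Gs k) k) \<longlonglongrightarrow> 0" by simp
qed

lemma transfer_eventually:
  fixes p :: "qpt multiset" and pk :: "nat \<Rightarrow> qpt multiset"
  assumes sz: "\<forall>k. size (pk k) = size p" and G: "(\<lambda>k. Gdist (pk k) p) \<longlonglongrightarrow> 0"
  defines "Rp \<equiv> (\<Sum>y\<in>set_mset p. norm y)"
  shows "\<forall>\<^sub>F k in sequentially. Aq eps d p \<le> Aq eps d (pk k) + ennreal (ek (size p) Rp (Gdist (pk k) p) k)
            \<and> 0 \<le> ek (size p) Rp (Gdist (pk k) p) k
            \<and> (same_max_mult (pk k) p \<longrightarrow> Aq eps d (pk k) \<le> Aq eps d p + ennreal (ek (size p) Rp (Gdist (pk k) p) k))"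
proof -
  obtain s where s: "s > 0" "\<forall>y\<in>set_mset p. \<forall>y'\<in>set_mset p. y \<noteq> y' \<longrightarrow> s \<le> dist y y'"
    using sep_exists[of "set_mset p"] by auto
  have G0: "\<forall>k. 0 \<le> Gdist (pk k) p" using sz Gdist_nonneg by metis
  have h: "(0::real) < s / 2" using s(1) by simp
  have ev1: "\<forall>\<^sub>F k in sequentially. Gdist (pk k) p < s / 2" by (rule order_tendstoD(2)[OF G h])
  have ev2: "\<forall>\<^sub>F k in sequentially. 0 < lamk (Gdist (pk k) p) k"
    using order_tendstoD(1)[OF ek_tendsto(2)[OF G G0]] by simp
  have Rp0: "0 \<le> Rp" unfolding Rp_def by (simp add: sum_nonneg)
  have normp: "norm y \<le> Rp" if "y \<in># p" for y
    unfolding Rp_def using that by (intro member_le_sum) auto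
  show ?thesis
    using ev1 ev2
  proof eventually_elim
    case (elim k)
    let ?G = "Gdist (pk k) p" and ?l = "lamk (Gdist (pk k) p) k"
    have l: "0 < ?l" "?l < 1" using elim lamk_lt1[of ?G k] G0 by auto
    have Gk0: "0 \<le> ?G" using G0 by auto
    obtain \<pi> where \<pi>: "p = image_mset \<pi> (pk k)" "\<forall>z\<in>#pk k. norm (z - \<pi> z) \<le> ?G"
      using cluster[OF sz[rule_format] s] elim by blast
    have Rk: "\<forall>z\<in>#pk k. norm z \<le> Rp + ?G"
    proof
      fix z assume z: "z \<in># pk k"
      have "\<pi> z \<in># p" using z \<pi>(1) by simp
      then have "norm (\<pi> z) \<le> Rp" by (rule normp)
      moreover have "norm z \<le> norm (\<pi> z) + norm (z - \<pi> z)" using norm_triangle_ineq[of "\<pi> z" "z - \<pi> z"] by simp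
      ultimately show "norm z \<le> Rp + ?G" using \<pi>(2) z by fastforce
    qed
    have A1: "Aq eps d p \<le> Aq eps d (pk k) + ennreal (ek (size p) Rp ?G k)"
      using Aq_transfer[OF \<pi>(2) Rk l Gk0, of eps d] Rp0 Gk0
      unfolding \<pi>(1)[symmetric] sz[rule_format, of k] ek_def by simp
    have e0: "0 \<le> ek (size p) Rp ?G k" using ek_nonneg[OF Gk0] l by simp
    have A2: "Aq eps d (pk k) \<le> Aq eps d p + ennreal (ek (size p) Rp ?G k)" if sm: "same_max_mult (pk k) p"
    proof -
      have "card (set_mset (pk k)) = card (set_mset p)"
        using arg_cong[OF sm[unfolded same_max_mult_def], of size] by simp
      then have inj: "inj_on \<pi> (set_mset (pk k))"
        using \<pi>(1) by (simp add: inj_on_iff_eq_card)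
      define \<rho> where "\<rho> = inv_into (set_mset (pk k)) \<pi>"
      have pk: "pk k = image_mset \<rho> p"
      proof -
        have "image_mset \<rho> p = image_mset (\<rho> \<circ> \<pi>) (pk k)" using \<pi>(1) by (simp add: multiset.map_comp)
        also have "\<dots> = image_mset id (pk k)"
          by (rule image_mset_cong) (simp add: \<rho>_def inv_into_f_f[OF inj])
        finally show ?thesis by simp
      qed
      have d: "\<forall>y\<in>#p. norm (y - \<rho> y) \<le> ?G"
      proof
        fix y assume y: "y \<in># p"
        then have yi: "y \<in> \<pi> ` set_mset (pk k)" using \<pi>(1) by simp
        have zi: "\<rho> y \<in># pk k" unfolding \<rho>_def using inv_into_into[OF yi] .
        have "\<pi> (\<rho> y) = y" unfolding \<rho>_def using f_inv_into_f[OF yi] .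
        then show "norm (y - \<rho> y) \<le> ?G" using \<pi>(2) zi by (metis norm_minus_commute)
      qed
      have R2: "\<forall>y\<in>#p. norm y \<le> Rp + ?G" using normp Gk0 by fastforce
      show ?thesis
        using Aq_transfer[OF d R2 l Gk0, of eps d] Rp0 Gk0
        unfolding pk[symmetric] ek_def by simp
    qed
    show ?case using A1 e0 A2 by blast
  qed
qed


lemma part1:
  fixes p :: "qpt multiset" and pk :: "nat \<Rightarrow> qpt multiset"
  assumes sz: "\<forall>k. size (pk k) = size p" and G: "(\<lambda>k. Gdist (pk k) p) \<longlonglongrightarrow> 0"
  shows "Aq eps d p \<le> liminf (\<lambda>k. Aq eps d (pk k))"
proof -
  define Rp where "Rp = (\<Sum>y\<in>set_mset p. norm y)"
  define e where "e k = ek (size p) Rp (Gdist (pk k) p) k" for k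
  have G0: "\<forall>k. 0 \<le> Gdist (pk k) p" using sz Gdist_nonneg by metis
  have et: "e \<longlonglongrightarrow> 0" unfolding e_def by (rule ek_tendsto(1)[OF G G0])
  have ev: "\<forall>\<^sub>F k in sequentially. Aq eps d p \<le> Aq eps d (pk k) + ennreal (e k) \<and> 0 \<le> e k"
    using transfer_eventually[OF sz G, of eps d] unfolding e_def Rp_def by (auto elim: eventually_mono)
  define r where "r = enn2real (Aq eps d p)"
  have Ar: "Aq eps d p = ennreal r" unfolding r_def using Aq_finite by simp
  have r0: "0 \<le> r" unfolding r_def by simp
  show ?thesis
  proof (subst le_Liminf_iff, intro allI impI)
    fix y assume y: "y < Aq eps d p"
    then have "y < top" using Aq_finite[of eps d p] by auto
    then obtain y' where y': "y = ennreal y'" "0 \<le> y'" by (cases y) auto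
    have yr: "y' < r" using y Ar y' r0 by (simp add: ennreal_less_iff)
    have ev2: "\<forall>\<^sub>F k in sequentially. e k < r - y'" using order_tendstoD(2)[OF et] yr by simp
    show "\<forall>\<^sub>F k in sequentially. y < Aq eps d (pk k)"
      using ev ev2
    proof eventually_elim
      case (elim k)
      show ?case
      proof (rule ccontr)
        assume "\<not> y < Aq eps d (pk k)"
        then have "Aq eps d (pk k) \<le> y" by simp
        then have "Aq eps d p \<le> y + ennreal (e k)" using elim by (meson add_right_mono order_trans)
        also have "\<dots> = ennreal (y' + e k)" using y' elim by simp
        also have "\<dots> < ennreal r" using elim y' by (intro ennreal_lessI) auto
        finally show False using Ar by simp
      qed
    qed
  qed
qed

lemma part2:
  fixes p :: "qpt multiset" and pk :: "nat \<Rightarrow> qpt multiset"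
  assumes sz: "\<forall>k. size (pk k) = size p" and G: "(\<lambda>k. Gdist (pk k) p) \<longlonglongrightarrow> 0"
    and sm: "\<forall>k. same_max_mult (pk k) p"
  shows "(\<lambda>k. Aq eps d (pk k)) \<longlonglongrightarrow> Aq eps d p"
proof -
  define Rp where "Rp = (\<Sum>y\<in>set_mset p. norm y)"
  define e where "e k = ek (size p) Rp (Gdist (pk k) p) k" for k
  have G0: "\<forall>k. 0 \<le> Gdist (pk k) p" using sz Gdist_nonneg by metis
  have et: "e \<longlonglongrightarrow> 0" unfolding e_def by (rule ek_tendsto(1)[OF G G0])
  have ev: "\<forall>\<^sub>F k in sequentially. Aq eps d p \<le> Aq eps d (pk k) + ennreal (e k) \<and> 0 \<le> e k
      \<and> Aq eps d (pk k) \<le> Aq eps d p + ennreal (e k)"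
    using transfer_eventually[OF sz G, of eps d] sm unfolding e_def Rp_def by (auto elim: eventually_mono)
  define r where "r = enn2real (Aq eps d p)"
  define rk where "rk k = enn2real (Aq eps d (pk k))" for k
  have Ar: "Aq eps d p = ennreal r" unfolding r_def using Aq_finite by simp
  have Ark: "Aq eps d (pk k) = ennreal (rk k)" for k unfolding rk_def using Aq_finite by simp
  have r0: "0 \<le> r" and rk0: "\<And>k. 0 \<le> rk k" unfolding r_def rk_def by auto
  have ev2: "\<forall>\<^sub>F k in sequentially. r - e k \<le> rk k \<and> rk k \<le> r + e k"
    using ev
  proof eventually_elim
    case (elim k)
    have e0: "0 \<le> e k" using elim by simp
    have eq1: "ennreal (rk k) + ennreal (e k) = ennreal (rk k + e k)" using rk0[of k] e0 by simp
    have eq2: "ennreal r + ennreal (e k) = ennreal (r + e k)" using r0 e0 by simp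
    have "ennreal r \<le> ennreal (rk k + e k)" using elim Ar Ark[of k] eq1 by metis
    then have 1: "r \<le> rk k + e k" using ennreal_le_iff[of "rk k + e k" r] rk0[of k] e0 by simp
    have "ennreal (rk k) \<le> ennreal (r + e k)" using elim Ar Ark[of k] eq2 by metis
    then have 2: "rk k \<le> r + e k" using ennreal_le_iff[of "r + e k" "rk k"] r0 e0 by simp
    show ?case using 1 2 by simp
  qed
  have "rk \<longlonglongrightarrow> r"
  proof (rule tendsto_sandwich[of "\<lambda>k. r - e k" _ _ "\<lambda>k. r + e k"])
    show "\<forall>\<^sub>F k in sequentially. r - e k \<le> rk k" using ev2 by (auto elim: eventually_mono)
    show "\<forall>\<^sub>F k in sequentially. rk k \<le> r + e k" using ev2 by (auto elim: eventually_mono)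
    show "(\<lambda>k. r - e k) \<longlonglongrightarrow> r" using tendsto_diff[OF tendsto_const et, of r] by simp
    show "(\<lambda>k. r + e k) \<longlonglongrightarrow> r" using tendsto_add[OF tendsto_const et, of r] by simp
  qed
  then have "(\<lambda>k. ennreal (rk k)) \<longlonglongrightarrow> ennreal r" by (rule tendsto_ennrealI)
  then show ?thesis using Ar Ark by simp
qed

lemma part3:
  fixes Q :: nat
  assumes "1 \<le> Q" "size p = Q"
  shows "Aq eps d p \<le> ennreal (2 * real Q ^ 3 * (1 + (Xnorm p)^2))"
proof -
  have "Aq eps d p \<le> ennreal (real Q * (1 + 2 * (real Q * Xnorm p)^2))"
    using affine_bound[of eps d p] assms by simp
  also have "\<dots> \<le> ennreal (2 * real Q ^ 3 * (1 + (Xnorm p)^2))"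
  proof (rule ennreal_leI)
    have q1: "1 \<le> real Q" using assms by simp
    have "real Q \<le> 2 * real Q ^ 3"
    proof -
      have "real Q ^ 1 \<le> real Q ^ 3" using q1 by (intro power_increasing) auto
      moreover have "0 \<le> real Q ^ 3" by simp
      ultimately show ?thesis by (simp only: power_one_right)
    qed
    moreover have "real Q * (1 + 2 * (real Q * Xnorm p)^2) = real Q + 2 * real Q ^ 3 * (Xnorm p)^2"
      by (simp add: power2_eq_square power3_eq_cube algebra_simps)
    moreover have "2 * real Q ^ 3 * (1 + (Xnorm p)^2) = 2 * real Q ^ 3 + 2 * real Q ^ 3 * (Xnorm p)^2"
      by (simp add: algebra_simps)
    ultimately show "real Q * (1 + 2 * (real Q * Xnorm p)^2) \<le> 2 * real Q ^ 3 * (1 + (Xnorm p)^2)"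
      by linarith
  qed
  finally show ?thesis .
qed

theorem mainTheorem8:
  fixes eps d :: real and Q :: nat
  assumes "0 < eps" and "eps < root 4 (4/3)"
    and "0 < d" and "wnorm (v1 eps d) = wnorm (v2 eps d)" and "wnorm (v2 eps d) = wnorm (v3 eps d)"
    and "1 \<le> Q"
  shows "(\<forall>(p::qpt multiset) (pk::nat \<Rightarrow> qpt multiset).
            size p = Q \<and> (\<forall>k. size (pk k) = Q) \<and> (\<lambda>k. Gdist (pk k) p) \<longlonglongrightarrow> 0
            \<longrightarrow> Aq eps d p \<le> liminf (\<lambda>k. Aq eps d (pk k)))
       \<and> (\<forall>(p::qpt multiset) (pk::nat \<Rightarrow> qpt multiset).
            size p = Q \<and> (\<forall>k. size (pk k) = Q) \<and> (\<forall>k. same_max_mult (pk k) p)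
            \<and> (\<lambda>k. Gdist (pk k) p) \<longlonglongrightarrow> 0
            \<longrightarrow> (\<lambda>k. Aq eps d (pk k)) \<longlonglongrightarrow> Aq eps d p)
       \<and> (\<exists>C>0. \<forall>p::qpt multiset. size p = Q \<longrightarrow> Aq eps d p \<le> ennreal (C * (1 + (Xnorm p)^2)))"
proof (intro conjI allI impI)
  fix p :: "qpt multiset" and pk :: "nat \<Rightarrow> qpt multiset"
  assume h: "size p = Q \<and> (\<forall>k. size (pk k) = Q) \<and> (\<lambda>k. Gdist (pk k) p) \<longlonglongrightarrow> 0"
  then show "Aq eps d p \<le> liminf (\<lambda>k. Aq eps d (pk k))" by (intro part1) auto
next
  fix p :: "qpt multiset" and pk :: "nat \<Rightarrow> qpt multiset"
  assume h: "size p = Q \<and> (\<forall>k. size (pk k) = Q) \<and> (\<forall>k. same_max_mult (pk k) p) \<and> (\<lambda>k. Gdist (pk k) p) \<longlonglongrightarrow> 0"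
  then show "(\<lambda>k. Aq eps d (pk k)) \<longlonglongrightarrow> Aq eps d p" by (intro part2) auto
next
  show "\<exists>C>0. \<forall>p::qpt multiset. size p = Q \<longrightarrow> Aq eps d p \<le> ennreal (C * (1 + (Xnorm p)^2))"
    using part3[OF assms(6)] assms(6) by (intro exI[of _ "2 * real Q ^ 3"]) auto
qed

end
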